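(* In the setting described in the context, with all standing assumptions in force, for every $i\in\{1,\dots,N\}$, $$\lim_{t\to\infty}\big\|\hat{\mathbf x}_{(i,\ell_i^t)}(\mathbf x_{(i,:)}^t)-\tilde{\mathbf x}_{(i,\ell_i^t)}^t\big\|=0 .$$
   Context: Problem. Let $N,B,d\ge1$. A vector $\mathbf x\in\mathbb R^{dB}$ is partitioned into blocks $\mathbf x=(\mathbf x_1,\dots,\mathbf x_B)$ with $\mathbf x_\ell\in\mathbb R^d$, and $\nabla_\ell$ denotes the partial gradient with respect to block $\ell$. Problem (P) is $$\min_{\mathbf x}\ U(\mathbf x)=\sum_{i=1}^Nf_i(\mathbf x)+\sum_{\ell=1}^B r_\ell(\mathbf x_\ell)\quad\text{s.t. }\mathbf x_\ell\in\mathcal K_\ell,\ \ell=1,\dots,B,$$ with $\mathcal K=\mathcal K_1\times\dots\times\mathcal K_B$. Problem assumptions: - each $\mathcal K_\ell\subseteq\mathbb R^d$ is nonempty, closed and convex; - each $f_i:\mathbb R^{dB}\to\mathbb R$ is $C^1$ on an open set containing $\mathcal K$, and $\nabla f_i$ is $L_i$-Lipschitz continuous and bounded on $\mathcal K$; - each $r_\ell:\mathbb R^d\to\mathbb R$ is convex with bounded subgradients on $\mathcal K_\ell$; - $U$ is coercive on $\mathcal K$. Network. $\mathcal G=(\{1,\dots,N\},\mathcal E)$ is a fixed, strongly connected digraph containing all self-loops. The in-neighbor set of $i$ is $\mathcal N_i=\{j:(j,i)\in\mathcal E\}$. Block selection. At each iteration $t\ge0$, agent $i$ picks $\ell_i^t\in\{1,\dots,B\}$.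 For each $i$ there is a finite $T_i>0$ with $\bigcup_{\tau=0}^{T_i-1}\{\ell_i^{t+\tau}\}=\{1,\dots,B\}$ for all $t\ge0$. Define $\mathcal N_{i,\ell}^t=\{j\in\mathcal N_i:\ell_j^t=\ell\}\cup\{i\}$ and $\mathcal E_\ell^t=\{(j,i)\in\mathcal E:j\in\mathcal N_{i,\ell}^t\}$. Weights. For each $\ell$ and $t$, $A_\ell^t=[a_{ij\ell}^t]$ satisfies $a_{ij\ell}^t>\kappa$ if $(j,i)\in\mathcal E_\ell^t$, $a_{ij\ell}^t=0$ otherwise (for a fixed $\kappa>0$), and $\mathbf 1^\top A_\ell^t=\mathbf 1^\top$. Surrogates. For each $i,\ell$, $\tilde f_{i,\ell}:\mathcal K_\ell\times\mathcal K\to\mathbb R$ satisfies: - $\tilde f_{i,\ell}(\cdot;\mathbf x)$ is $C^1$ and $\tau_i$-strongly convex on $\mathcal K_\ell$ uniformly in $\mathbf x\in\mathcal K$, with $\tau_i>0$; - $\nabla\tilde f_{i,\ell}(\mathbf x_\ell;\mathbf x)=\nabla_\ell f_i(\mathbf x)$ for all $\mathbf x\in\mathcal K$, where $\nabla\tilde f_{i,\ell}$ is the gradient in the first argument and $\mathbf x_\ell$ is the $\ell$-th block of $\mathbf x$; - $\nabla\tilde f_{i,\ell}(\mathbf z;\cdot)$ is Lipschitz continuous on $\mathcal K$ uniformly in $\mathbf z\in\mathcal K_\ell$. For $\mathbf w\in\mathcal K$ and $\mathbf g\in\mathbb R^d$ let $$\hat f_{i,\ell}(\mathbf z;\mathbf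 w,\mathbf g)=\tilde f_{i,\ell}(\mathbf z;\mathbf w)+(N\mathbf g-\nabla_\ell f_i(\mathbf w))^\top(\mathbf z-\mathbf w_\ell).$$ Best-response map: for $\mathbf w\in\mathcal K$ define $$\hat{\mathbf x}_{(i,\ell)}(\mathbf w)=\arg\min_{\mathbf z\in\mathcal K_\ell}\ \hat f_{i,\ell}\Big(\mathbf z;\mathbf w,\tfrac1N\sum_{j=1}^N\nabla_\ell f_j(\mathbf w)\Big)+r_\ell(\mathbf z).$$ Step sizes. $0<\gamma^t\le1$, $\gamma^{t+1}\le\gamma^t$, $\sum_t\gamma^t=\infty$, $\sum_t(\gamma^t)^2<\infty$. Algorithm. Agent $i$ holds $\mathbf x_{(i,:)}^t=(\mathbf x_{(i,\ell)}^t)_\ell$, $\mathbf y_{(i,:)}^t=(\mathbf y_{(i,\ell)}^t)_\ell$ in $\mathbb R^{dB}$ and scalars $\phi_{(i,\ell)}^t$. Initialization: $\mathbf x_{(i,:)}^0\in\mathcal K$ arbitrary, $\mathbf y_{(i,:)}^0=\nabla f_i(\mathbf x_{(i,:)}^0)$, $\phi_{(i,\ell)}^0=1$. At iteration $t$, each agent $i$: - computes $\tilde{\mathbf x}_{(i,\ell_i^t)}^t=\arg\min_{\mathbf z\in\mathcal K_{\ell_i^t}}\hat f_{i,\ell_i^t}(\mathbf z;\mathbf x_{(i,:)}^t,\mathbf y_{(i,\ell_i^t)}^t)+r_{\ell_i^t}(\mathbf z)$; - sets $\Delta\mathbf x_{(i,\ell)}^t=\tilde{\mathbf x}_{(i,\ell)}^t-\mathbf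 x_{(i,\ell)}^t$ if $\ell=\ell_i^t$ and $\Delta\mathbf x_{(i,\ell)}^t=\mathbf 0$ otherwise; - for every $\ell$ updates $$\phi_{(i,\ell)}^{t+1}=\sum_{j\in\mathcal N_{i,\ell}^t}a_{ij\ell}^t\phi_{(j,\ell)}^t,\qquad \mathbf x_{(i,\ell)}^{t+1}=\sum_{j\in\mathcal N_{i,\ell}^t}\frac{a_{ij\ell}^t\phi_{(j,\ell)}^t}{\phi_{(i,\ell)}^{t+1}}\big(\mathbf x_{(j,\ell)}^t+\gamma^t\Delta\mathbf x_{(j,\ell)}^t\big),$$ $$\mathbf y_{(i,\ell)}^{t+1}=\sum_{j\in\mathcal N_{i,\ell}^t}\frac{a_{ij\ell}^t}{\phi_{(i,\ell)}^{t+1}}\Big(\phi_{(j,\ell)}^t\mathbf y_{(j,\ell)}^t+\nabla_\ell f_j(\mathbf x_{(j,:)}^{t+1})-\nabla_\ell f_j(\mathbf x_{(j,:)}^t)\Big).$$ *)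

theory Defs
  imports "HOL-Analysis.Analysis"
begin

definition strongly_convex_on :: "'a::real_normed_vector set \<Rightarrow> real \<Rightarrow> ('a \<Rightarrow> real) \<Rightarrow> bool" where
  "strongly_convex_on S \<tau> g \<longleftrightarrow>
     (\<forall>u\<in>S. \<forall>v\<in>S. \<forall>\<theta>::real. 0 \<le> \<theta> \<and> \<theta> \<le> 1 \<longrightarrow>
        g (\<theta> *\<^sub>R u + (1 - \<theta>) *\<^sub>R v) \<le> \<theta> * g u + (1 - \<theta>) * g v - \<tau> / 2 * \<theta> * (1 - \<theta>) * (norm (u - v))\<^sup>2)"

text \<open>The (unique, under the standing assumptions) minimiser of F over S.\<close>
definition argmin_on :: "'a set \<Rightarrow> ('a \<Rightarrow> real) \<Rightarrow> 'a" where
  "argmin_on S F = (THE z. z \<in> S \<and> (\<forall>y\<in>S. F z \<le> F y))"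

definition is_subgradient :: "('a::real_inner \<Rightarrow> real) \<Rightarrow> 'a \<Rightarrow> 'a \<Rightarrow> bool" where
  "is_subgradient g z v \<longleftrightarrow> (\<forall>w. g z + v \<bullet> (w - z) \<le> g w)"

definition prodK :: "('b::finite \<Rightarrow> 'a set) \<Rightarrow> ('a ^ 'b) set" where
  "prodK K = {x. \<forall>l. x $ l \<in> K l}"

definition in_nbrs :: "('n \<times> 'n) set \<Rightarrow> 'n \<Rightarrow> 'n set" where
  "in_nbrs E i = {j. (j, i) \<in> E}"

definition nbrs_blk :: "('n \<times> 'n) set \<Rightarrow> ('n \<Rightarrow> nat \<Rightarrow> 'b) \<Rightarrow> 'n \<Rightarrow> 'b \<Rightarrow> nat \<Rightarrow> 'n set" where
  "nbrs_blk E sel i l t = {j \<in> in_nbrs E i. sel j t = l} \<union> {i}"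

definition edges_blk :: "('n \<times> 'n) set \<Rightarrow> ('n \<Rightarrow> nat \<Rightarrow> 'b) \<Rightarrow> 'b \<Rightarrow> nat \<Rightarrow> ('n \<times> 'n) set" where
  "edges_blk E sel l t = {(j, i) \<in> E. j \<in> nbrs_blk E sel i l t}"

definition fhat :: "('n::finite \<Rightarrow> 'b::finite \<Rightarrow> real^'d \<Rightarrow> real^'d^'b \<Rightarrow> real)
     \<Rightarrow> ('n \<Rightarrow> real^'d^'b \<Rightarrow> real^'d^'b) \<Rightarrow> 'n \<Rightarrow> 'b \<Rightarrow> real^'d \<Rightarrow> real^'d^'b \<Rightarrow> real^'d \<Rightarrow> real" where
  "fhat ft gf i l z w g = ft i l z w + (real CARD('n) *\<^sub>R g - gf i w $ l) \<bullet> (z - w $ l)"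

definition xhat :: "('n::finite \<Rightarrow> 'b::finite \<Rightarrow> real^'d \<Rightarrow> real^'d^'b \<Rightarrow> real)
     \<Rightarrow> ('n \<Rightarrow> real^'d^'b \<Rightarrow> real^'d^'b) \<Rightarrow> ('b \<Rightarrow> real^'d \<Rightarrow> real) \<Rightarrow> ('b \<Rightarrow> (real^'d) set)
     \<Rightarrow> 'n \<Rightarrow> 'b \<Rightarrow> real^'d^'b \<Rightarrow> real^'d" where
  "xhat ft gf r K i l w = argmin_on (K l)
     (\<lambda>z. fhat ft gf i l z w ((1 / real CARD('n)) *\<^sub>R (\<Sum>j\<in>UNIV. gf j w $ l)) + r l z)"

end

theory Submission
  imports Defs
begin

lemma limit_ineq_aux:
  fixes a b :: real
  assumes "b \<ge> 0" and "\<And>\<theta>. 0 < \<theta> \<Longrightarrow> \<theta> < 1 \<Longrightarrow> b * (1 - \<theta>) \<le> a"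
  shows "b \<le> a"
proof (rule ccontr)
  assume "\<not> b \<le> a"
  hence ba: "a < b" by simp
  hence bp: "b > 0" using assms(1) assms(2)[of "1/2"] by auto
  define \<theta> where "\<theta> = (b - a) / (2*b)"
  have t0: "0 < \<theta>" using ba bp by (simp add: \<theta>_def)
  have t1: "\<theta> < 1"
  proof -
    have "b - a < 2*b" using assms(2)[of "1/2"] bp by auto
    thus ?thesis using bp by (simp add: \<theta>_def)
  qed
  have "b * (1 - \<theta>) = b - (b - a)/2" using bp by (simp add: \<theta>_def field_simps)
  also have "\<dots> > a" using ba by (simp add: field_simps)
  finally show False using assms(2)[OF t0 t1] by simp
qed

lemma sc_convex:
  assumes "strongly_convex_on S \<tau> g" "\<tau> \<ge> 0" "u \<in> S" "v \<in> S" "0 \<le> \<theta>" "\<theta> \<le> 1"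
  shows "g (\<theta> *\<^sub>R u + (1 - \<theta>) *\<^sub>R v) \<le> \<theta> * g u + (1 - \<theta>) * g v"
proof -
  have "0 \<le> \<tau> / 2 * \<theta> * (1 - \<theta>) * (norm (u - v))\<^sup>2" using assms by simp
  moreover have "g (\<theta> *\<^sub>R u + (1 - \<theta>) *\<^sub>R v) \<le> \<theta> * g u + (1 - \<theta>) * g v - \<tau> / 2 * \<theta> * (1 - \<theta>) * (norm (u - v))\<^sup>2"
    using assms unfolding strongly_convex_on_def by blast
  ultimately show ?thesis by linarith
qed

lemma min_growth:
  fixes F :: "'a::real_normed_vector \<Rightarrow> real"
  assumes sc: "strongly_convex_on S \<tau> F" and tau: "\<tau> \<ge> 0" and cvx: "convex S"
    and z: "z \<in> S" and zmin: "\<forall>y\<in>S. F z \<le> F y" and y: "y \<in> S"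
  shows "F z + \<tau> / 2 * (norm (y - z))\<^sup>2 \<le> F y"
proof -
  have "\<tau> / 2 * (norm (y - z))\<^sup>2 \<le> F y - F z"
  proof (rule limit_ineq_aux)
    show "0 \<le> \<tau> / 2 * (norm (y - z))\<^sup>2" using tau by simp
    fix \<theta> :: real assume t: "0 < \<theta>" "\<theta> < 1"
    have p: "\<theta> *\<^sub>R y + (1 - \<theta>) *\<^sub>R z \<in> S"
      using cvx z y t by (simp add: convex_def)
    have "F z \<le> F (\<theta> *\<^sub>R y + (1 - \<theta>) *\<^sub>R z)" using zmin p by blast
    also have "\<dots> \<le> \<theta> * F y + (1 - \<theta>) * F z - \<tau> / 2 * \<theta> * (1 - \<theta>) * (norm (y - z))\<^sup>2"
      using sc y z t unfolding strongly_convex_on_def by simp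
    finally have "\<theta> * (\<tau> / 2 * (1 - \<theta>) * (norm (y - z))\<^sup>2) \<le> \<theta> * (F y - F z)"
      by (simp add: algebra_simps)
    hence "\<tau> / 2 * (1 - \<theta>) * (norm (y - z))\<^sup>2 \<le> F y - F z" using t by simp
    thus "\<tau> / 2 * (norm (y - z))\<^sup>2 * (1 - \<theta>) \<le> F y - F z" by (simp add: algebra_simps)
  qed
  thus ?thesis by simp
qed

lemma min_exists:
  fixes F :: "'a::euclidean_space \<Rightarrow> real"
  assumes sc: "strongly_convex_on S \<tau> F" and tau: "\<tau> > 0" and cvx: "convex S"
    and cl: "closed S" and ne: "S \<noteq> {}" and cont: "continuous_on S F"
  shows "\<exists>z\<in>S. \<forall>y\<in>S. F z \<le> F y"
proof -
  obtain z0 where z0: "z0 \<in> S" using ne by blast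
  obtain \<delta> where dp: "\<delta> > 0" and dc: "\<And>z. z \<in> S \<Longrightarrow> dist z z0 < \<delta> \<Longrightarrow> dist (F z) (F z0) < 1"
    using cont z0 unfolding continuous_on_iff by (metis zero_less_one)
  define R where "R = 8 / (\<tau> * \<delta>) + \<delta>"
  have far: "F z > F z0" if zS: "z \<in> S" and zR: "norm (z - z0) \<ge> R" for z
  proof -
    define D where "D = norm (z - z0)"
    have "8 / (\<tau> * \<delta>) \<ge> 0" using dp tau by simp
    hence Dge: "D \<ge> 8 / (\<tau> * \<delta>)" "D \<ge> \<delta>" using zR dp unfolding D_def R_def
      by linarith+
    have Dp: "D > 0" using Dge dp by simp
    define \<theta> where "\<theta> = \<delta> / (2 * D)"
    have t0: "0 < \<theta>" using dp Dp by (simp add: \<theta>_def)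
    have th: "\<theta> \<le> 1/2" using Dge Dp dp by (simp add: \<theta>_def field_simps)
    define p where "p = \<theta> *\<^sub>R z + (1 - \<theta>) *\<^sub>R z0"
    have pS: "p \<in> S" using cvx zS z0 t0 th by (simp add: convex_def p_def)
    have "p - z0 = \<theta> *\<^sub>R (z - z0)" by (simp add: p_def algebra_simps)
    hence "norm (p - z0) = \<theta> * D" using t0 by (simp add: D_def)
    also have "\<dots> = \<delta> / 2" using Dp by (simp add: \<theta>_def)
    finally have "dist p z0 < \<delta>" using dp by (simp add: dist_norm)
    hence Fp: "F p > F z0 - 1" using dc[OF pS] by (simp add: dist_real_def abs_less_iff)
    have "F p \<le> \<theta> * F z + (1 - \<theta>) * F z0 - \<tau> / 2 * \<theta> * (1 - \<theta>) * D\<^sup>2"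
      using sc zS z0 t0 th unfolding strongly_convex_on_def p_def D_def by simp
    hence "\<theta> * (F z - F z0) \<ge> F p - F z0 + \<tau> / 2 * \<theta> * (1 - \<theta>) * D\<^sup>2"
      by (simp add: algebra_simps)
    moreover have "\<tau> / 2 * \<theta> * (1 - \<theta>) * D\<^sup>2 \<ge> \<tau> / 2 * \<theta> * (1/2) * D\<^sup>2"
      using th t0 tau by (intro mult_left_mono mult_right_mono) auto
    moreover have "\<tau> / 2 * \<theta> * (1/2) * D\<^sup>2 = \<tau> * \<delta> * D / 8"
      using Dp by (simp add: \<theta>_def power2_eq_square field_simps)
    moreover have "\<tau> * \<delta> * D / 8 \<ge> 1"
    proof -
      have "\<tau> * \<delta> * D \<ge> \<tau> * \<delta> * (8 / (\<tau> * \<delta>))"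
        using Dge tau dp by (intro mult_left_mono) auto
      thus ?thesis using tau dp by simp
    qed
    ultimately have "\<theta> * (F z - F z0) > 0" using Fp by linarith
    thus ?thesis using t0 by (simp add: zero_less_mult_iff)
  qed
  define C where "C = cball z0 R \<inter> S"
  have cC: "compact C" unfolding C_def using compact_Int_closed[OF compact_cball cl] by simp
  have "8 / (\<tau> * \<delta>) \<ge> 0" using dp tau by simp
  hence "R \<ge> 0" using dp by (simp add: R_def)
  hence z0C: "z0 \<in> C" using z0 by (simp add: C_def)
  hence neC: "C \<noteq> {}" by blast
  obtain w where wC: "w \<in> C" and wmin: "\<And>y. y \<in> C \<Longrightarrow> F w \<le> F y"
    using continuous_attains_inf[OF cC neC continuous_on_subset[OF cont]] by (auto simp: C_def)
  have "\<forall>y\<in>S. F w \<le> F y"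
  proof
    fix y assume yS: "y \<in> S"
    show "F w \<le> F y"
    proof (cases "y \<in> C")
      case True thus ?thesis using wmin by blast
    next
      case False
      hence "norm (y - z0) \<ge> R" using yS by (auto simp: C_def dist_norm norm_minus_commute)
      hence "F y > F z0" using far yS by blast
      moreover note z0C
      ultimately show ?thesis using wmin by force
    qed
  qed
  thus ?thesis using wC C_def by blast
qed

lemma argmin_props:
  fixes F :: "'a::euclidean_space \<Rightarrow> real"
  assumes sc: "strongly_convex_on S \<tau> F" and tau: "\<tau> > 0" and cvx: "convex S"
    and cl: "closed S" and ne: "S \<noteq> {}" and cont: "continuous_on S F"
  shows "argmin_on S F \<in> S" "\<And>y. y \<in> S \<Longrightarrow> F (argmin_on S F) + \<tau> / 2 * (norm (y - argmin_on S F))\<^sup>2 \<le> F y"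
proof -
  obtain z where z: "z \<in> S" "\<forall>y\<in>S. F z \<le> F y" using min_exists[OF assms] by blast
  have "argmin_on S F = z" unfolding argmin_on_def
  proof (rule the_equality)
    show "z \<in> S \<and> (\<forall>y\<in>S. F z \<le> F y)" using z by blast
    fix w assume w: "w \<in> S \<and> (\<forall>y\<in>S. F w \<le> F y)"
    have "F z + \<tau> / 2 * (norm (w - z))\<^sup>2 \<le> F w" using min_growth[OF sc _ cvx z(1) z(2)] w tau by auto
    moreover have "F w \<le> F z" using w z by blast
    ultimately have "\<tau> / 2 * (norm (w - z))\<^sup>2 \<le> 0" by simp
    hence "(norm (w - z))\<^sup>2 \<le> 0" using tau by (simp add: mult_le_0_iff)
    thus "w = z" by simp
  qed
  thus "argmin_on S F \<in> S" "\<And>y. y \<in> S \<Longrightarrow> F (argmin_on S F) + \<tau> / 2 * (norm (y - argmin_on S F))\<^sup>2 \<le> F y"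
    using z min_growth[OF sc _ cvx z(1) z(2)] tau by auto
qed

lemma grad_ineq:
  fixes g :: "'a::real_inner \<Rightarrow> real"
  assumes cv: "\<And>u v \<theta>. u \<in> S \<Longrightarrow> v \<in> S \<Longrightarrow> 0 \<le> \<theta> \<Longrightarrow> \<theta> \<le> 1 \<Longrightarrow>
                 g (\<theta> *\<^sub>R u + (1 - \<theta>) *\<^sub>R v) \<le> \<theta> * g u + (1 - \<theta>) * g v"
    and x: "x \<in> S" and z: "z \<in> S"
    and d: "(g has_derivative (\<lambda>h. D \<bullet> h)) (at x)"
  shows "g x + D \<bullet> (z - x) \<le> g z"
proof -
  define v where "v = z - x"
  define \<phi> where "\<phi> = (\<lambda>\<theta>::real. g (x + \<theta> *\<^sub>R v))"
  have l: "((\<lambda>\<theta>::real. x + \<theta> *\<^sub>R v) has_derivative (\<lambda>\<theta>. \<theta> *\<^sub>R v)) (at 0)"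
    by (auto intro!: derivative_eq_intros)
  have d0: "(g has_derivative (\<lambda>h. D \<bullet> h)) (at ((\<lambda>\<theta>::real. x + \<theta> *\<^sub>R v) 0))" using d by simp
  have "((g \<circ> (\<lambda>\<theta>::real. x + \<theta> *\<^sub>R v)) has_derivative ((\<lambda>h. D \<bullet> h) \<circ> (\<lambda>\<theta>. \<theta> *\<^sub>R v))) (at 0)"
    by (rule diff_chain_at[OF l d0])
  moreover have "((\<lambda>h. D \<bullet> h) \<circ> (\<lambda>\<theta>. \<theta> *\<^sub>R v)) = (*) (D \<bullet> v)"
    by (auto simp: fun_eq_iff)
  ultimately have "(\<phi> has_field_derivative (D \<bullet> v)) (at 0)"
    by (simp add: has_field_derivative_def \<phi>_def comp_def)
  hence "((\<lambda>y. (\<phi> y - \<phi> 0) / (y - 0)) \<longlongrightarrow> D \<bullet> v) (at 0)"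
    using has_field_derivative_iff by blast
  hence lim: "((\<lambda>y. (\<phi> y - \<phi> 0) / y) \<longlongrightarrow> D \<bullet> v) (at_right 0)"
    by (auto intro: tendsto_mono[OF at_le])
  have ev: "eventually (\<lambda>y. (\<phi> y - \<phi> 0) / y \<le> g z - g x) (at_right (0::real))"
  proof (rule eventually_mono[OF eventually_at_right_real[of 0 1]])
    show "(0::real) < 1" by simp
  next
    fix y :: real assume y: "y \<in> {0<..<1}"
    have "x + y *\<^sub>R v = y *\<^sub>R z + (1 - y) *\<^sub>R x" by (simp add: v_def algebra_simps)
    hence "\<phi> y \<le> y * g z + (1 - y) * g x" using cv[OF z x, of y] y by (simp add: \<phi>_def)
    hence "\<phi> y - \<phi> 0 \<le> y * (g z - g x)" by (simp add: \<phi>_def algebra_simps)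
    thus "(\<phi> y - \<phi> 0) / y \<le> g z - g x" using y by (simp add: divide_le_eq mult.commute)
  qed
  have "D \<bullet> v \<le> g z - g x"
    by (rule tendsto_upperbound[OF lim ev]) simp
  thus ?thesis by (simp add: v_def)
qed

lemma subgrad_exists:
  fixes r :: "'a::euclidean_space \<Rightarrow> real"
  assumes cv: "convex_on UNIV r"
  shows "\<exists>v. is_subgradient r x v"
proof -
  define Ep where "Ep = {p :: 'a \<times> real. r (fst p) \<le> snd p}"
  have cEp: "convex Ep" unfolding convex_def Ep_def
  proof (clarsimp)
    fix a :: 'a and b :: real and c :: 'a and d :: real and u v :: real
    assume h: "r a \<le> b" "r c \<le> d" "0 \<le> u" "0 \<le> v" "u + v = 1"
    have "r (u *\<^sub>R a + v *\<^sub>R c) \<le> u * r a + v * r c"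
      using convex_onD[OF cv, of v a c] h by (simp add: eq_diff_eq[symmetric])
    also have "\<dots> \<le> u * b + v * d" using h by (intro add_mono mult_left_mono) auto
    finally show "r (u *\<^sub>R a + v *\<^sub>R c) \<le> u * b + v * d" .
  qed
  have inE: "(x, r x) \<in> Ep" by (simp add: Ep_def)
  have nri: "(x, r x) \<notin> rel_interior Ep"
  proof
    assume "(x, r x) \<in> rel_interior Ep"
    then obtain T where T: "open T" "(x, r x) \<in> T" "T \<inter> affine hull Ep \<subseteq> Ep"
      unfolding mem_rel_interior by blast
    obtain e where e: "e > 0" "ball (x, r x) e \<subseteq> T" using T(1,2) open_contains_ball by blast
    define q where "q = (x, r x - e/2)"
    have "dist (x, r x) q = e/2" using e by (simp add: q_def dist_Pair_Pair dist_real_def)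
    hence "q \<in> T" using e by (auto simp: q_def)
    moreover have "q \<in> affine hull Ep"
    proof -
      have "(x, r x + e/2) \<in> Ep" using e by (simp add: Ep_def)
      hence a1: "(x, r x) \<in> affine hull Ep" "(x, r x + e/2) \<in> affine hull Ep"
        using inE by (auto intro: hull_inc)
      have "(2::real) *\<^sub>R (x, r x) + (-1) *\<^sub>R (x, r x + e/2) \<in> affine hull Ep"
        using mem_affine[OF affine_affine_hull a1, of 2 "-1"] by simp
      moreover have "(2::real) *\<^sub>R (x, r x) + (-1) *\<^sub>R (x, r x + e/2) = q"
        by (simp add: q_def algebra_simps, simp add: scaleR_2)
      ultimately show ?thesis by simp
    qed
    ultimately have "q \<in> Ep" using T(3) by blast
    thus False using e by (simp add: q_def Ep_def)
  qed
  have inE': "(x, r x) \<in> closure Ep" using inE closure_subset by blast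
  obtain a where a: "a \<noteq> 0" "\<And>y. y \<in> closure Ep \<Longrightarrow> a \<bullet> (x, r x) \<le> a \<bullet> y"
    "\<And>y. y \<in> rel_interior Ep \<Longrightarrow> a \<bullet> (x, r x) < a \<bullet> y"
    apply (rule supporting_hyperplane_relative_frontier[OF cEp inE' nri])
    by (erule meta_allE, erule meta_impE, assumption, blast+)
  obtain a1 a0 where a10: "a = (a1, a0)" by fastforce
  have key: "a1 \<bullet> x + a0 * r x \<le> a1 \<bullet> y + a0 * s" if "r y \<le> s" for y s
  proof -
    have "(y, s) \<in> closure Ep" using that by (auto intro: closure_subset[THEN subsetD] simp: Ep_def)
    hence "a \<bullet> (x, r x) \<le> a \<bullet> (y, s)" using a(2) by blast
    thus ?thesis by (simp add: a10)
  qed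
  have a0n: "a0 \<ge> 0" using key[of x "r x + 1"] by (simp add: algebra_simps)
  have a0p: "a0 > 0"
  proof (rule ccontr)
    assume "\<not> a0 > 0"
    hence a0z: "a0 = 0" using a0n by simp
    have "a1 \<bullet> x \<le> a1 \<bullet> (x - a1)" using key[of "x - a1" "r (x - a1)"] a0z by simp
    hence "a1 \<bullet> a1 \<le> 0" by (simp add: inner_diff_right)
    hence "a1 = 0" using inner_gt_zero_iff[of a1] by linarith
    thus False using a(1) a10 a0z by (simp add: zero_prod_def)
  qed
  define v where "v = (- (1 / a0)) *\<^sub>R a1"
  have "is_subgradient r x v" unfolding is_subgradient_def
  proof
    fix w
    have "a1 \<bullet> x + a0 * r x \<le> a1 \<bullet> w + a0 * r w" using key[of w "r w"] by simp
    hence "a0 * (r x - r w) \<le> a1 \<bullet> (w - x)" by (simp add: algebra_simps inner_diff_right)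
    hence "r x - r w \<le> (1 / a0) * (a1 \<bullet> (w - x))" using a0p by (simp add: field_simps)
    thus "r x + v \<bullet> (w - x) \<le> r w" by (simp add: v_def)
  qed
  thus ?thesis by blast
qed

fun prodm :: "(nat \<Rightarrow> 'n::finite \<Rightarrow> 'n \<Rightarrow> real) \<Rightarrow> nat \<Rightarrow> nat \<Rightarrow> 'n \<Rightarrow> 'n \<Rightarrow> real" where
  "prodm a s 0 j k = (if j = k then 1 else 0)"
| "prodm a s (Suc n) j k = (\<Sum>m\<in>UNIV. a (s + n) j m * prodm a s n m k)"

lemma swap_helper:
  fixes a :: "'n::finite \<Rightarrow> real"
  shows "(\<Sum>m\<in>UNIV. a m * (\<Sum>k\<in>UNIV. P m k * v k)) = (\<Sum>k\<in>UNIV. (\<Sum>m\<in>UNIV. a m * P m k) * v k)"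
proof -
  have "(\<Sum>m\<in>UNIV. a m * (\<Sum>k\<in>UNIV. P m k * v k)) = (\<Sum>m\<in>UNIV. \<Sum>k\<in>UNIV. a m * P m k * v k)"
    by (simp add: sum_distrib_left mult.assoc)
  also have "\<dots> = (\<Sum>k\<in>UNIV. \<Sum>m\<in>UNIV. a m * P m k * v k)" by (rule sum.swap)
  also have "\<dots> = (\<Sum>k\<in>UNIV. (\<Sum>m\<in>UNIV. a m * P m k) * v k)" by (simp add: sum_distrib_right)
  finally show ?thesis .
qed

lemma prodm_nonneg:
  assumes "\<And>t j k. 0 \<le> a t j k"
  shows "0 \<le> prodm a s n j k"
  by (induction n arbitrary: j k) (auto intro!: sum_nonneg mult_nonneg_nonneg assms)

lemma prodm_rows:
  assumes "\<And>t j. (\<Sum>k\<in>UNIV. a t j k) = 1"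
  shows "(\<Sum>k\<in>UNIV. prodm a s n j k) = 1"
proof (induction n arbitrary: j)
  case 0 thus ?case by simp
next
  case (Suc n)
  have "(\<Sum>k\<in>UNIV. prodm a s (Suc n) j k) = (\<Sum>m\<in>UNIV. a (s + n) j m * (\<Sum>k\<in>UNIV. prodm a s n m k * 1))"
    by (subst swap_helper) simp
  also have "\<dots> = 1" using Suc assms by simp
  finally show ?case .
qed

lemma prodm_prop:
  assumes "\<And>t j. v (Suc t) j = (\<Sum>k\<in>UNIV. a t j k * v t k)"
  shows "v (s + n) j = (\<Sum>k\<in>UNIV. prodm a s n j k * v s k)"
proof (induction n arbitrary: j)
  case 0
  have "(\<Sum>k\<in>UNIV. prodm a s 0 j k * v s k) = (\<Sum>k\<in>UNIV. if j = k then v s k else 0)"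
    by (rule sum.cong) auto
  thus ?case by simp
next
  case (Suc n)
  have "v (s + Suc n) j = (\<Sum>m\<in>UNIV. a (s + n) j m * v (s + n) m)" using assms by simp
  also have "\<dots> = (\<Sum>m\<in>UNIV. a (s + n) j m * (\<Sum>k\<in>UNIV. prodm a s n m k * v s k))" using Suc by simp
  also have "\<dots> = (\<Sum>k\<in>UNIV. prodm a s (Suc n) j k * v s k)"
    by (subst swap_helper) simp
  finally show ?case .
qed

lemma prodm_pert:
  assumes nn: "\<And>t j k. 0 \<le> a t j k" and rows: "\<And>t j. (\<Sum>k\<in>UNIV. a t j k) = 1"
    and dyn: "\<And>t j. \<bar>v (Suc t) j - (\<Sum>k\<in>UNIV. a t j k * v t k)\<bar> \<le> \<epsilon> t"
  shows "\<bar>v (s + n) j - (\<Sum>k\<in>UNIV. prodm a s n j k * v s k)\<bar> \<le> (\<Sum>q<n. \<epsilon> (s + q))"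
proof (induction n arbitrary: j)
  case 0
  have "(\<Sum>k\<in>UNIV. prodm a s 0 j k * v s k) = (\<Sum>k\<in>UNIV. if j = k then v s k else 0)"
    by (rule sum.cong) auto
  thus ?case by simp
next
  case (Suc n)
  define R where "R m = v (s + n) m - (\<Sum>k\<in>UNIV. prodm a s n m k * v s k)" for m
  have R: "\<bar>R m\<bar> \<le> (\<Sum>q<n. \<epsilon> (s + q))" for m using Suc R_def by simp
  have e: "\<bar>v (s + Suc n) j - (\<Sum>m\<in>UNIV. a (s + n) j m * v (s + n) m)\<bar> \<le> \<epsilon> (s + n)"
    using dyn[of "s + n" j] by simp
  have "(\<Sum>m\<in>UNIV. a (s + n) j m * v (s + n) m) =
        (\<Sum>m\<in>UNIV. a (s + n) j m * (\<Sum>k\<in>UNIV. prodm a s n m k * v s k)) + (\<Sum>m\<in>UNIV. a (s + n) j m * R m)"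
    unfolding sum.distrib[symmetric] by (rule sum.cong) (simp_all add: R_def algebra_simps)
  also have "(\<Sum>m\<in>UNIV. a (s + n) j m * (\<Sum>k\<in>UNIV. prodm a s n m k * v s k)) = (\<Sum>k\<in>UNIV. prodm a s (Suc n) j k * v s k)"
    by (subst swap_helper) simp
  finally have eq: "(\<Sum>m\<in>UNIV. a (s + n) j m * v (s + n) m) = (\<Sum>k\<in>UNIV. prodm a s (Suc n) j k * v s k) + (\<Sum>m\<in>UNIV. a (s + n) j m * R m)" .
  have "\<bar>\<Sum>m\<in>UNIV. a (s + n) j m * R m\<bar> \<le> (\<Sum>m\<in>UNIV. a (s + n) j m * (\<Sum>q<n. \<epsilon> (s + q)))"
    by (rule order_trans[OF sum_abs]) (auto intro!: sum_mono mult_left_mono R simp: abs_mult nn)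
  also have "\<dots> = (\<Sum>q<n. \<epsilon> (s + q))" using rows by (simp add: sum_distrib_right[symmetric])
  finally have "\<bar>\<Sum>m\<in>UNIV. a (s + n) j m * R m\<bar> \<le> (\<Sum>q<n. \<epsilon> (s + q))" .
  thus ?case using e eq by simp
qed

lemma prodm_step:
  assumes nn: "\<And>t j k. 0 \<le> a t j k"
  shows "a (s + n) j m * prodm a s n m k \<le> prodm a s (Suc n) j k"
proof -
  have "a (s + n) j m * prodm a s n m k \<le> (\<Sum>m'\<in>UNIV. a (s + n) j m' * prodm a s n m' k)"
    by (rule member_le_sum) (auto intro: mult_nonneg_nonneg nn prodm_nonneg)
  thus ?thesis by simp
qed

locale pathpos =
  fixes a :: "nat \<Rightarrow> 'n::finite \<Rightarrow> 'n \<Rightarrow> real" and act :: "nat \<Rightarrow> 'n \<Rightarrow> 'n \<Rightarrow> bool"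
    and c :: real and E :: "('n \<times> 'n) set" and T :: nat
  assumes nn: "\<And>t j k. 0 \<le> a t j k"
    and actc: "\<And>t k j. act t k j \<Longrightarrow> c \<le> a t j k"
    and loops: "\<And>t j. act t j j"
    and c0: "0 < c" and c1: "c \<le> 1"
    and win: "\<And>s k j. (k, j) \<in> E \<Longrightarrow> \<exists>q<T. act (s + q) k j"
    and conn: "\<And>j k. (j, k) \<in> E\<^sup>*"
begin

lemma mono1: "c ^ n \<le> prodm a s n j k \<Longrightarrow> c ^ Suc n \<le> prodm a s (Suc n) j k"
proof -
  assume h: "c ^ n \<le> prodm a s n j k"
  have "c ^ Suc n = c * c ^ n" by simp
  also have "\<dots> \<le> a (s + n) j j * prodm a s n j k"
    using h actc[OF loops] c0 by (intro mult_mono) (auto simp: less_imp_le nn)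
  also have "\<dots> \<le> prodm a s (Suc n) j k" by (rule prodm_step[OF nn])
  finally show ?thesis .
qed

lemma monop: "c ^ n \<le> prodm a s n j k \<Longrightarrow> c ^ (n + p) \<le> prodm a s (n + p) j k"
proof (induction p)
  case 0 thus ?case by simp
next
  case (Suc p) thus ?case using mono1[of "n + p" s j k] by simp
qed

lemma monole: "c ^ n \<le> prodm a s n j k \<Longrightarrow> n \<le> n' \<Longrightarrow> c ^ n' \<le> prodm a s n' j k"
  using monop[of n s j k "n' - n"] by simp

lemma edge1: "c ^ n \<le> prodm a s n m k \<Longrightarrow> act (s + n) m j \<Longrightarrow> c ^ Suc n \<le> prodm a s (Suc n) j k"
proof -
  assume h: "c ^ n \<le> prodm a s n m k" and e: "act (s + n) m j"
  have "c ^ Suc n = c * c ^ n" by simp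
  also have "\<dots> \<le> a (s + n) j m * prodm a s n m k"
    using h actc[OF e] c0 by (intro mult_mono) (auto simp: less_imp_le nn)
  also have "\<dots> \<le> prodm a s (Suc n) j k" by (rule prodm_step[OF nn])
  finally show ?thesis .
qed

lemma reach: "(k, j) \<in> E ^^ n \<Longrightarrow> c ^ (n * T) \<le> prodm a s (n * T) j k"
proof (induction n arbitrary: j)
  case 0 thus ?case by simp
next
  case (Suc n)
  then obtain m where km: "(k, m) \<in> E ^^ n" and mj: "(m, j) \<in> E" by (auto elim: relpow_Suc_E)
  have ih: "c ^ (n * T) \<le> prodm a s (n * T) m k" using Suc.IH[OF km] .
  obtain q where q: "q < T" "act (s + n * T + q) m j" using win[OF mj] by blast
  have "c ^ (n * T + q) \<le> prodm a s (n * T + q) m k" using monop[OF ih] .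
  hence "c ^ Suc (n * T + q) \<le> prodm a s (Suc (n * T + q)) j k"
    using edge1 q(2) by (simp add: add.assoc)
  moreover have "Suc (n * T + q) \<le> Suc n * T" using q(1) by simp
  ultimately show ?case by (rule monole)
qed

definition "B = card E"

lemma allpos: "c ^ (B * T) \<le> prodm a s (B * T) j k"
proof -
  have "finite E" by simp
  have "(k, j) \<in> E\<^sup>*" by (rule conn)
  hence "(k, j) \<in> (\<Union>n\<in>{n. n \<le> card E}. E ^^ n)"
    using rtrancl_finite_eq_relpow[OF \<open>finite E\<close>] by simp
  then obtain n where n: "n \<le> card E" "(k, j) \<in> E ^^ n" by blast
  have "n * T \<le> B * T" using n(1) by (simp add: B_def)
  with reach[OF n(2)] show ?thesis by (rule monole)
qed

end

definition spr :: "('n::finite \<Rightarrow> real) \<Rightarrow> real" where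
  "spr u = Max ((\<lambda>p. \<bar>u (fst p) - u (snd p)\<bar>) ` UNIV)"

lemma spr_ge: "\<bar>u j - u k\<bar> \<le> spr u"
  unfolding spr_def by (rule Max_ge) (auto intro: image_eqI[where x="(j,k)"])

lemma spr_nonneg: "0 \<le> spr u"
  using spr_ge[of u undefined undefined] by simp

lemma spr_le: "(\<And>j k. \<bar>u j - u k\<bar> \<le> D) \<Longrightarrow> spr u \<le> D"
  unfolding spr_def by (subst Max_le_iff) auto

lemma mix:
  fixes p q u :: "'n::finite \<Rightarrow> real"
  assumes pn: "\<And>k. C \<le> p k" and C: "0 \<le> C" and qn: "\<And>k. 0 \<le> q k"
    and ps: "sum p UNIV = 1" and qs: "sum q UNIV = 1"
    and D: "\<And>k m. \<bar>u k - u m\<bar> \<le> D"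
  shows "\<bar>(\<Sum>k\<in>UNIV. p k * u k) - (\<Sum>k\<in>UNIV. q k * u k)\<bar> \<le> (1 - C) * D"
proof -
  have pnn: "0 \<le> p k" for k using pn[of k] C by linarith
  have "(\<Sum>k\<in>UNIV. p k * u k) - (\<Sum>k\<in>UNIV. q k * u k) = (\<Sum>k\<in>UNIV. \<Sum>m\<in>UNIV. p k * q m * (u k - u m))"
  proof -
    have "(\<Sum>k\<in>UNIV. \<Sum>m\<in>UNIV. p k * q m * (u k - u m)) =
          (\<Sum>k\<in>UNIV. \<Sum>m\<in>UNIV. p k * u k * q m) - (\<Sum>k\<in>UNIV. \<Sum>m\<in>UNIV. p k * (q m * u m))"
      by (simp add: algebra_simps sum_subtractf)
    also have "(\<Sum>k\<in>UNIV. \<Sum>m\<in>UNIV. p k * u k * q m) = (\<Sum>k\<in>UNIV. p k * u k)"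
      by (simp add: sum_distrib_left[symmetric] qs)
    also have "(\<Sum>k\<in>UNIV. \<Sum>m\<in>UNIV. p k * (q m * u m)) = (\<Sum>k\<in>UNIV. q k * u k)"
      by (simp add: sum_distrib_left[symmetric] sum_distrib_right[symmetric] ps)
    finally show ?thesis by simp
  qed
  also have "\<bar>\<dots>\<bar> \<le> (\<Sum>k\<in>UNIV. \<Sum>m\<in>UNIV. p k * q m * (D - (if k = m then D else 0)))"
  proof (rule order_trans[OF sum_abs], rule sum_mono, rule order_trans[OF sum_abs], rule sum_mono)
    fix k m
    have "\<bar>u k - u m\<bar> \<le> D - (if k = m then D else 0)" using D[of k m] by auto
    thus "\<bar>p k * q m * (u k - u m)\<bar> \<le> p k * q m * (D - (if k = m then D else 0))"
      using pnn qn by (simp add: abs_mult mult_left_mono)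
  qed
  also have "\<dots> = D * (\<Sum>k\<in>UNIV. p k * (\<Sum>m\<in>UNIV. q m)) - D * (\<Sum>k\<in>UNIV. p k * q k)"
  proof -
    have "(\<Sum>k\<in>UNIV. \<Sum>m\<in>UNIV. p k * q m * (D - (if k = m then D else 0))) =
       (\<Sum>k\<in>UNIV. (\<Sum>m\<in>UNIV. D * (p k * q m)) - (\<Sum>m\<in>UNIV. (if k = m then D * (p k * q m) else 0)))"
      unfolding sum_subtractf[symmetric] by (intro sum.cong refl) (auto simp: algebra_simps)
    also have "\<dots> = (\<Sum>k\<in>UNIV. D * (p k * (\<Sum>m\<in>UNIV. q m)) - D * (p k * q k))"
      by (intro sum.cong refl) (simp add: sum_distrib_left)
    also have "\<dots> = D * (\<Sum>k\<in>UNIV. p k * (\<Sum>m\<in>UNIV. q m)) - D * (\<Sum>k\<in>UNIV. p k * q k)"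
      by (simp add: sum_subtractf sum_distrib_left)
    finally show ?thesis .
  qed
  also have "\<dots> \<le> (1 - C) * D"
  proof -
    have D0: "0 \<le> D" using D[of undefined undefined] by simp
    have "C = (\<Sum>k\<in>UNIV. C * q k)" by (simp add: sum_distrib_left[symmetric] qs)
    also have "\<dots> \<le> (\<Sum>k\<in>UNIV. p k * q k)" by (rule sum_mono) (use pn qn in \<open>simp add: mult_right_mono\<close>)
    finally have "D * C \<le> D * (\<Sum>k\<in>UNIV. p k * q k)" using D0 by (rule mult_left_mono)
    thus ?thesis using ps qs by (simp add: algebra_simps)
  qed
  finally show ?thesis .
qed

locale consensus =
  fixes W :: "nat \<Rightarrow> 'n::finite \<Rightarrow> 'n \<Rightarrow> real" and M :: nat and C :: real
  assumes nn: "\<And>t j k. 0 \<le> W t j k"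
    and rows: "\<And>t j. (\<Sum>k\<in>UNIV. W t j k) = 1"
    and pos: "\<And>s j k. C \<le> prodm W s M j k"
    and C0: "0 < C" and M0: "0 < M"
begin

lemma C1: "C \<le> 1"
proof -
  have "C \<le> prodm W 0 M undefined undefined" by (rule pos)
  also have "\<dots> \<le> (\<Sum>k\<in>UNIV. prodm W 0 M undefined k)"
    by (rule member_le_sum) (auto intro: prodm_nonneg nn)
  also have "\<dots> = 1" by (rule prodm_rows[OF rows])
  finally show ?thesis .
qed

context
  fixes v :: "nat \<Rightarrow> 'n \<Rightarrow> real" and \<epsilon> :: "nat \<Rightarrow> real"
  assumes dyn: "\<And>t j. \<bar>v (Suc t) j - (\<Sum>k\<in>UNIV. W t j k * v t k)\<bar> \<le> \<epsilon> t"
begin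

lemma eps_nn: "0 \<le> \<epsilon> t"
  using dyn[of t undefined] by linarith

lemma spr_gen:
  assumes Cp: "0 \<le> C'" and Cpos: "\<And>j k. C' \<le> prodm W s n j k"
  shows "spr (v (s + n)) \<le> (1 - C') * spr (v s) + 2 * (\<Sum>q<n. \<epsilon> (s + q))"
proof (rule spr_le)
  fix j k
  have a: "\<bar>v (s + n) j - (\<Sum>m\<in>UNIV. prodm W s n j m * v s m)\<bar> \<le> (\<Sum>q<n. \<epsilon> (s + q))"
    by (rule prodm_pert[where a=W and v=v and \<epsilon>=\<epsilon>, OF nn rows dyn])
  have b: "\<bar>v (s + n) k - (\<Sum>m\<in>UNIV. prodm W s n k m * v s m)\<bar> \<le> (\<Sum>q<n. \<epsilon> (s + q))"
    by (rule prodm_pert[where a=W and v=v and \<epsilon>=\<epsilon>, OF nn rows dyn])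
  have c: "\<bar>(\<Sum>m\<in>UNIV. prodm W s n j m * v s m) - (\<Sum>m\<in>UNIV. prodm W s n k m * v s m)\<bar> \<le> (1 - C') * spr (v s)"
    by (rule mix[OF Cpos Cp prodm_nonneg[where a=W, OF nn] prodm_rows[OF rows] prodm_rows[OF rows] spr_ge])
  show "\<bar>v (s + n) j - v (s + n) k\<bar> \<le> (1 - C') * spr (v s) + 2 * (\<Sum>q<n. \<epsilon> (s + q))"
    using a b c by linarith
qed

lemma spr_any: "spr (v (s + n)) \<le> spr (v s) + 2 * (\<Sum>q<n. \<epsilon> (s + q))"
  using spr_gen[of 0 s n] prodm_nonneg[where a=W, OF nn] by fastforce

lemma spr_M: "spr (v (s + M)) \<le> (1 - C) * spr (v s) + 2 * (\<Sum>q<M. \<epsilon> (s + q))"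
  using spr_gen[of C s M] pos C0 by simp

lemma sum_eps_le:
  fixes \<delta> :: real
  assumes "\<And>t. t \<ge> ts \<Longrightarrow> \<epsilon> t \<le> \<delta>" "s \<ge> ts" "n \<le> M"
  shows "(\<Sum>q<n. \<epsilon> (s + q)) \<le> M * \<delta>"
proof -
  have "(\<Sum>q<n. \<epsilon> (s + q)) \<le> (\<Sum>q<n. \<delta>)" by (rule sum_mono) (use assms in simp)
  also have "\<dots> = n * \<delta>" by simp
  also have "\<dots> \<le> M * \<delta>" using assms(1)[of ts] assms(3) eps_nn[of ts] by (intro mult_right_mono) auto
  finally show ?thesis .
qed

lemma geo_bound:
  fixes \<delta> :: real
  assumes ed: "\<And>t. t \<ge> ts \<Longrightarrow> \<epsilon> t \<le> \<delta>"
  shows "t \<ge> ts \<Longrightarrow> spr (v t) \<le> (1 - C) ^ ((t - ts) div M) * (spr (v ts) + 2 * M * \<delta>) + 2 * M * \<delta> / C"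
proof (induction t rule: less_induct)
  case (less t)
  have d0: "0 \<le> \<delta>" using ed[of ts] eps_nn[of ts] by simp
  have K0: "0 \<le> 2 * M * \<delta> / C" using d0 C0 by simp
  show ?case
  proof (cases "t < ts + M")
    case True
    define n where "n = t - ts"
    have tn: "t = ts + n" "n < M" using True less.prems by (auto simp: n_def)
    have "(t - ts) div M = 0" using tn by simp
    moreover have "spr (v t) \<le> spr (v ts) + 2 * (M * \<delta>)"
      using spr_any[of ts n] sum_eps_le[where ts=ts and \<delta>=\<delta> and s=ts and n=n, OF ed] tn by simp
    ultimately show ?thesis using K0 by simp
  next
    case False
    define t' where "t' = t - M"
    have tt: "t = t' + M" "t' \<ge> ts" "t' < t" using False M0 by (auto simp: t'_def)
    have ih: "spr (v t') \<le> (1 - C) ^ ((t' - ts) div M) * (spr (v ts) + 2 * M * \<delta>) + 2 * M * \<delta> / C"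
      using less.IH[OF tt(3) tt(2)] .
    have dv: "(t - ts) div M = Suc ((t' - ts) div M)"
    proof -
      have "t - ts = (t' - ts) + M" using tt by simp
      thus ?thesis using M0 by simp
    qed
    have "spr (v t) \<le> (1 - C) * spr (v t') + 2 * (M * \<delta>)"
      using spr_M[of t'] sum_eps_le[where ts=ts and \<delta>=\<delta> and s=t' and n=M, OF ed tt(2)] tt(1) by simp
    also have "\<dots> \<le> (1 - C) * ((1 - C) ^ ((t' - ts) div M) * (spr (v ts) + 2 * M * \<delta>) + 2 * M * \<delta> / C) + 2 * (M * \<delta>)"
      using ih C1 by (intro add_right_mono mult_left_mono) auto
    also have "\<dots> = (1 - C) ^ ((t - ts) div M) * (spr (v ts) + 2 * M * \<delta>) + 2 * M * \<delta> / C"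
      using C0 by (simp add: dv field_simps)
    finally show ?thesis .
  qed
qed

lemma spr_bounded:
  fixes \<delta> :: real
  assumes "\<And>t. \<epsilon> t \<le> \<delta>"
  shows "spr (v t) \<le> spr (v 0) + 2 * M * \<delta> + 2 * M * \<delta> / C"
proof -
  have d0: "0 \<le> \<delta>" using assms[of 0] eps_nn[of 0] by simp
  have "spr (v t) \<le> (1 - C) ^ ((t - 0) div M) * (spr (v 0) + 2 * M * \<delta>) + 2 * M * \<delta> / C"
    using geo_bound[where ts=0 and \<delta>=\<delta> and t=t] assms by simp
  also have "(1 - C) ^ ((t - 0) div M) * (spr (v 0) + 2 * M * \<delta>) \<le> 1 * (spr (v 0) + 2 * M * \<delta>)"
    using C0 C1 d0 spr_nonneg[of "v 0"] by (intro mult_right_mono power_le_one) auto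
  finally show ?thesis by simp
qed

lemma spr_tendsto:
  assumes "\<epsilon> \<longlonglongrightarrow> 0"
  shows "(\<lambda>t. spr (v t)) \<longlonglongrightarrow> 0"
proof (rule LIMSEQ_I)
  fix e :: real assume e: "0 < e"
  define \<delta> where "\<delta> = e * C / (8 * M)"
  have dp: "0 < \<delta>" using e C0 M0 by (simp add: \<delta>_def)
  obtain t0 where t0: "\<And>t. t \<ge> t0 \<Longrightarrow> norm (\<epsilon> t - 0) < \<delta>" using LIMSEQ_D[OF assms dp] by blast
  have ed: "\<And>t. t \<ge> t0 \<Longrightarrow> \<epsilon> t \<le> \<delta>" using t0 by fastforce
  define b where "b = spr (v t0) + 2 * M * \<delta>"
  have b0: "0 \<le> b" using spr_nonneg[of "v t0"] dp by (simp add: b_def)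
  have "(\<lambda>k. (1 - C) ^ k) \<longlonglongrightarrow> 0" using C0 C1 by (intro LIMSEQ_power_zero) auto
  then obtain k0 where k0: "\<And>k. k \<ge> k0 \<Longrightarrow> norm ((1 - C) ^ k - 0) < e / (4 * (b + 1))"
    using LIMSEQ_D[of _ 0 "e / (4 * (b + 1))"] e b0 by (metis divide_pos_pos mult_pos_pos zero_less_numeral add_nonneg_pos zero_less_one)
  have K: "2 * M * \<delta> / C = e / 4" using C0 M0 by (simp add: \<delta>_def field_simps)
  show "\<exists>no. \<forall>n\<ge>no. norm (spr (v n) - 0) < e"
  proof (intro exI allI impI)
    fix t assume t: "t \<ge> t0 + k0 * M"
    have kk: "(t - t0) div M \<ge> k0"
    proof -
      have "k0 * M \<le> t - t0" using t by simp
      hence "(k0 * M) div M \<le> (t - t0) div M" by (rule div_le_mono)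
      thus ?thesis using M0 by simp
    qed
    have pw: "(1 - C) ^ ((t - t0) div M) < e / (4 * (b + 1))" using k0[OF kk] C1 by simp
    have "(1 - C) ^ ((t - t0) div M) * b \<le> e / (4 * (b + 1)) * b"
      using pw b0 by (intro mult_right_mono) auto
    also have "\<dots> \<le> e / 4"
    proof -
      have "e / (4 * (b + 1)) * b = e / 4 * (b / (b + 1))" by (simp add: field_simps)
      also have "\<dots> \<le> e / 4 * 1" using b0 e by (intro mult_left_mono) auto
      finally show ?thesis by simp
    qed
    finally have "(1 - C) ^ ((t - t0) div M) * b \<le> e / 4" .
    moreover have "spr (v t) \<le> (1 - C) ^ ((t - t0) div M) * b + 2 * M * \<delta> / C"
      using geo_bound[where ts=t0 and \<delta>=\<delta> and t=t, OF ed] t by (simp add: b_def)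
    ultimately have "spr (v t) \<le> e / 4 + e / 4" using K by (metis add_mono order_trans order_refl)
    thus "norm (spr (v t) - 0) < e" using spr_nonneg[of "v t"] e by simp
  qed
qed

end
end

locale setting =
  fixes K :: "'b::finite \<Rightarrow> (real^'d) set"
    and f :: "'n::finite \<Rightarrow> real^'d^'b \<Rightarrow> real"
    and gf :: "'n \<Rightarrow> real^'d^'b \<Rightarrow> real^'d^'b"
    and Lf :: "'n \<Rightarrow> real"
    and r :: "'b \<Rightarrow> real^'d \<Rightarrow> real"
    and E :: "('n \<times> 'n) set"
    and sel :: "'n \<Rightarrow> nat \<Rightarrow> 'b"
    and A :: "'b \<Rightarrow> nat \<Rightarrow> 'n \<Rightarrow> 'n \<Rightarrow> real"
    and \<kappa> :: real
    and ft :: "'n \<Rightarrow> 'b \<Rightarrow> real^'d \<Rightarrow> real^'d^'b \<Rightarrow> real"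
    and gft :: "'n \<Rightarrow> 'b \<Rightarrow> real^'d \<Rightarrow> real^'d^'b \<Rightarrow> real^'d"
    and \<tau> :: "'n \<Rightarrow> real"
    and \<gamma> :: "nat \<Rightarrow> real"
    and X :: "nat \<Rightarrow> 'n \<Rightarrow> real^'d^'b"
    and Y :: "nat \<Rightarrow> 'n \<Rightarrow> real^'d^'b"
    and \<Phi> :: "nat \<Rightarrow> 'n \<Rightarrow> 'b \<Rightarrow> real"
    and xt :: "nat \<Rightarrow> 'n \<Rightarrow> real^'d"
  assumes K_ne: "\<And>l. K l \<noteq> {}"
    and K_closed: "\<And>l. closed (K l)"
    and K_convex: "\<And>l. convex (K l)"
    and f_C1: "\<And>j. \<exists>S. open S \<and> prodK K \<subseteq> S \<and> continuous_on S (gf j) \<and>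
                   (\<forall>x\<in>S. (f j has_derivative (\<lambda>h. gf j x \<bullet> h)) (at x))"
    and gf_lipschitz: "\<And>j. \<forall>x\<in>prodK K. \<forall>y\<in>prodK K. norm (gf j x - gf j y) \<le> Lf j * norm (x - y)"
    and gf_bounded: "\<And>j. bounded (gf j ` prodK K)"
    and r_convex: "\<And>l. convex_on UNIV (r l)"
    and r_subgrad_bounded: "\<And>l. \<exists>M. \<forall>z\<in>K l. \<forall>v. is_subgradient (r l) z v \<longrightarrow> norm v \<le> M"
    and U_coercive: "\<And>M. \<exists>R. \<forall>x\<in>prodK K. R \<le> norm x \<longrightarrow>
                        M \<le> (\<Sum>j\<in>UNIV. f j x) + (\<Sum>l\<in>UNIV. r l (x $ l))"
    and E_strong: "\<And>j k. (j, k) \<in> E\<^sup>*"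
    and E_loops: "\<And>j. (j, j) \<in> E"
    and sel_cover: "\<And>j. \<exists>T>0. \<forall>t. (\<Union>s<T. {sel j (t + s)}) = UNIV"
    and \<kappa>_pos: "\<kappa> > 0"
    and A_pos: "\<And>l t j k. (k, j) \<in> edges_blk E sel l t \<Longrightarrow> A l t j k > \<kappa>"
    and A_zero: "\<And>l t j k. (k, j) \<notin> edges_blk E sel l t \<Longrightarrow> A l t j k = 0"
    and A_colstoch: "\<And>l t k. (\<Sum>j\<in>UNIV. A l t j k) = 1"
    and \<tau>_pos: "\<And>j. \<tau> j > 0"
    and ft_deriv: "\<And>j l x z. x \<in> prodK K \<Longrightarrow> z \<in> K l \<Longrightarrow>
                     ((\<lambda>u. ft j l u x) has_derivative (\<lambda>h. gft j l z x \<bullet> h)) (at z)"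
    and ft_C1: "\<And>j l x. x \<in> prodK K \<Longrightarrow> continuous_on (K l) (\<lambda>z. gft j l z x)"
    and ft_strong: "\<And>j l x. x \<in> prodK K \<Longrightarrow> strongly_convex_on (K l) (\<tau> j) (\<lambda>z. ft j l z x)"
    and ft_grad: "\<And>j l x. x \<in> prodK K \<Longrightarrow> gft j l (x $ l) x = gf j x $ l"
    and ft_lipschitz: "\<And>j l. \<exists>L. \<forall>z\<in>K l. \<forall>x\<in>prodK K. \<forall>y\<in>prodK K.
                          norm (gft j l z x - gft j l z y) \<le> L * norm (x - y)"
    and \<gamma>_pos: "\<And>t. 0 < \<gamma> t"
    and \<gamma>_le1: "\<And>t. \<gamma> t \<le> 1"
    and \<gamma>_mono: "\<And>t. \<gamma> (Suc t) \<le> \<gamma> t"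
    and \<gamma>_div: "\<not> summable \<gamma>"
    and \<gamma>_sq: "summable (\<lambda>t. (\<gamma> t)\<^sup>2)"
    and X0: "\<And>j. X 0 j \<in> prodK K"
    and Y0: "\<And>j. Y 0 j = gf j (X 0 j)"
    and \<Phi>0: "\<And>j l. \<Phi> 0 j l = 1"
    and xt_def: "\<And>t j. xt t j = argmin_on (K (sel j t))
                   (\<lambda>z. fhat ft gf j (sel j t) z (X t j) (Y t j $ sel j t) + r (sel j t) z)"
    and \<Phi>_upd: "\<And>t j l. \<Phi> (Suc t) j l = (\<Sum>k\<in>nbrs_blk E sel j l t. A l t j k * \<Phi> t k l)"
    and X_upd: "\<And>t j l. X (Suc t) j $ l =
                  (\<Sum>k\<in>nbrs_blk E sel j l t. (A l t j k * \<Phi> t k l / \<Phi> (Suc t) j l) *\<^sub>R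
                     (X t k $ l + \<gamma> t *\<^sub>R (if l = sel k t then xt t k - X t k $ l else 0)))"
    and Y_upd: "\<And>t j l. Y (Suc t) j $ l =
                  (\<Sum>k\<in>nbrs_blk E sel j l t. (A l t j k / \<Phi> (Suc t) j l) *\<^sub>R
                     (\<Phi> t k l *\<^sub>R (Y t k $ l) + gf k (X (Suc t) k) $ l - gf k (X t k) $ l))"
begin



lemma NN_ge1: "real CARD('n) \<ge> 1" by simp

lemma not_nbrs_A0: "k \<notin> nbrs_blk E sel j l t \<Longrightarrow> A l t j k = 0"
  by (rule A_zero) (simp add: edges_blk_def)

lemma sum_nbrs:
  assumes "\<And>k. A l t j k = 0 \<Longrightarrow> g k = 0"
  shows "(\<Sum>k\<in>nbrs_blk E sel j l t. g k) = (\<Sum>k\<in>UNIV. g k)"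
  by (rule sum.mono_neutral_left) (auto intro: assms not_nbrs_A0)

lemma A_nn: "0 \<le> A l t j k"
proof (cases "(k, j) \<in> edges_blk E sel l t")
  case True thus ?thesis using A_pos[OF True] \<kappa>_pos by simp
next
  case False thus ?thesis using A_zero[OF False] by simp
qed

lemma loop_edge: "(j, j) \<in> edges_blk E sel l t"
  using E_loops by (simp add: edges_blk_def nbrs_blk_def)

lemma A_le1: "A l t j k \<le> 1"
proof -
  have "A l t j k \<le> (\<Sum>j'\<in>UNIV. A l t j' k)" by (rule member_le_sum) (auto intro: A_nn)
  thus ?thesis using A_colstoch by simp
qed

lemma kappa1: "\<kappa> < 1"
  using A_pos[OF loop_edge, of l t j] A_le1[of l t j j] by simp

definition "Tw j = (SOME T. T > 0 \<and> (\<forall>t. (\<Union>s<T. {sel j (t + s)}) = UNIV))"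
definition "TT = Max (range Tw)"

lemma Tw: "Tw j > 0 \<and> (\<forall>t. (\<Union>s<Tw j. {sel j (t + s)}) = UNIV)"
  unfolding Tw_def by (rule someI_ex) (use sel_cover in blast)

lemma TT_pos: "TT > 0"
proof -
  have "Tw undefined \<le> TT" unfolding TT_def by (rule Max_ge) auto
  thus ?thesis using Tw[of undefined] by simp
qed

lemma win_sel: "\<exists>q<TT. sel k (s + q) = l"
proof -
  have "l \<in> (\<Union>q<Tw k. {sel k (s + q)})" using Tw[of k] by blast
  then obtain q where "q < Tw k" "sel k (s + q) = l" by blast
  moreover have "Tw k \<le> TT" unfolding TT_def by (rule Max_ge) auto
  ultimately show ?thesis by (intro exI[of _ q]) auto
qed

lemma win_edge: "(k, j) \<in> E \<Longrightarrow> \<exists>q<TT. (k, j) \<in> edges_blk E sel l (s + q)"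
proof -
  assume kj: "(k, j) \<in> E"
  obtain q where q: "q < TT" "sel k (s + q) = l" using win_sel by blast
  hence "(k, j) \<in> edges_blk E sel l (s + q)" using kj
    by (simp add: edges_blk_def nbrs_blk_def in_nbrs_def)
  thus ?thesis using q(1) by blast
qed

definition "MM = card E * TT"

lemma MM_pos: "MM > 0"
proof -
  have "E \<noteq> {}" using E_loops by blast
  hence "card E > 0" by (simp add: card_gt_0_iff)
  thus ?thesis using TT_pos by (simp add: MM_def)
qed

lemma pathpos_A: "pathpos (A l) (\<lambda>t k j. (k, j) \<in> edges_blk E sel l t) \<kappa> E TT"
  by unfold_locales (auto intro: A_nn less_imp_le[OF A_pos] loop_edge \<kappa>_pos less_imp_le[OF kappa1] win_edge E_strong)

lemma Phi_upd': "\<Phi> (Suc t) j l = (\<Sum>k\<in>UNIV. A l t j k * \<Phi> t k l)"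
  unfolding \<Phi>_upd by (rule sum_nbrs) simp

lemma Phi_ge_pow: "\<Phi> t j l \<ge> \<kappa> ^ t"
proof (induction t arbitrary: j)
  case 0 thus ?case by (simp add: \<Phi>0)
next
  case (Suc t)
  have nn: "0 \<le> \<Phi> t k l" for k using Suc[of k] \<kappa>_pos by (meson order_trans zero_le_power less_imp_le)
  have "\<kappa> ^ Suc t = \<kappa> * \<kappa> ^ t" by simp
  also have "\<dots> \<le> A l t j j * \<Phi> t j l"
    using A_pos[OF loop_edge, of l t j] Suc[of j] \<kappa>_pos by (intro mult_mono) auto
  also have "\<dots> \<le> (\<Sum>k\<in>UNIV. A l t j k * \<Phi> t k l)"
    by (rule member_le_sum) (auto intro: mult_nonneg_nonneg A_nn nn)
  finally show ?case by (simp add: Phi_upd')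
qed

lemma Phi_pos: "\<Phi> t j l > 0"
  using Phi_ge_pow[of t j l] \<kappa>_pos by (meson less_le_trans zero_less_power)

lemma Phi_sum: "(\<Sum>j\<in>UNIV. \<Phi> t j l) = real CARD('n)"
proof (induction t)
  case 0 thus ?case by (simp add: \<Phi>0)
next
  case (Suc t)
  have "(\<Sum>j\<in>UNIV. \<Phi> (Suc t) j l) = (\<Sum>j\<in>UNIV. \<Sum>k\<in>UNIV. A l t j k * \<Phi> t k l)" by (simp add: Phi_upd')
  also have "\<dots> = (\<Sum>k\<in>UNIV. \<Sum>j\<in>UNIV. A l t j k * \<Phi> t k l)" by (rule sum.swap)
  also have "\<dots> = (\<Sum>k\<in>UNIV. \<Phi> t k l)" by (simp add: sum_distrib_right[symmetric] A_colstoch)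
  finally show ?case using Suc by simp
qed

lemma Phi_le: "\<Phi> t j l \<le> real CARD('n)"
proof -
  have "\<Phi> t j l \<le> (\<Sum>j\<in>UNIV. \<Phi> t j l)" by (rule member_le_sum) (auto intro: less_imp_le[OF Phi_pos])
  thus ?thesis using Phi_sum by simp
qed

definition "phimin = \<kappa> ^ MM"

lemma phimin_pos: "phimin > 0" using \<kappa>_pos by (simp add: phimin_def)
lemma phimin_le1: "phimin \<le> 1" using \<kappa>_pos kappa1 by (simp add: phimin_def power_le_one)

lemma Phi_ge: "\<Phi> t j l \<ge> phimin"
proof (cases "t \<le> MM")
  case True
  have "phimin \<le> \<kappa> ^ t" unfolding phimin_def using True \<kappa>_pos kappa1 by (intro power_decreasing) auto
  thus ?thesis using Phi_ge_pow[of t j l] by simp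
next
  case False
  define s where "s = t - MM"
  have ts: "t = s + MM" using False by (simp add: s_def)
  interpret P: pathpos "A l" "\<lambda>t k j. (k, j) \<in> edges_blk E sel l t" \<kappa> E TT by (rule pathpos_A)
  have "\<Phi> (s + MM) j l = (\<Sum>k\<in>UNIV. prodm (A l) s MM j k * \<Phi> s k l)"
    by (rule prodm_prop[where v="\<lambda>t k. \<Phi> t k l"]) (simp add: Phi_upd')
  also have "\<dots> \<ge> (\<Sum>k\<in>UNIV. phimin * \<Phi> s k l)"
    using P.allpos[of s j] Phi_pos by (intro sum_mono mult_right_mono) (auto simp: phimin_def MM_def P.B_def less_imp_le)
  finally have "\<Phi> (s + MM) j l \<ge> phimin * real CARD('n)" by (simp add: sum_distrib_left[symmetric] Phi_sum)
  moreover have "phimin * real CARD('n) \<ge> phimin" using phimin_pos by simp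
  ultimately show ?thesis using ts by simp
qed

end

lemma quad_le:
  fixes d K \<tau> :: real
  assumes "0 \<le> d" "0 < \<tau>" "\<tau> * d\<^sup>2 \<le> K * d" "0 \<le> K"
  shows "d \<le> K / \<tau>"
proof (cases "d = 0")
  case True thus ?thesis using assms by simp
next
  case False
  hence dp: "d > 0" using assms(1) by simp
  have "\<tau> * d * d \<le> K * d" using assms(3) by (simp add: power2_eq_square mult.assoc)
  hence "\<tau> * d \<le> K" using dp by simp
  thus ?thesis using assms(2) by (simp add: field_simps)
qed

context setting
begin

definition "obj j l x g = (\<lambda>z. fhat ft gf j l z x g + r l z)"

lemma ft_cont: "x \<in> prodK K \<Longrightarrow> continuous_on (K l) (\<lambda>z. ft j l z x)"
  by (rule continuous_at_imp_continuous_on) (use ft_deriv has_derivative_continuous in blast)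

lemma r_cont: "continuous_on S (r l)"
  using convex_on_continuous[OF open_UNIV r_convex[of l]] continuous_on_subset by blast

lemma obj_cont: "x \<in> prodK K \<Longrightarrow> continuous_on (K l) (obj j l x g)"
  unfolding obj_def fhat_def
  by (intro continuous_intros ft_cont r_cont)

lemma obj_sc: "x \<in> prodK K \<Longrightarrow> strongly_convex_on (K l) (\<tau> j) (obj j l x g)"
  unfolding strongly_convex_on_def
proof (intro ballI allI impI)
  fix u v and \<theta> :: real assume x: "x \<in> prodK K" and uv: "u \<in> K l" "v \<in> K l" and th: "0 \<le> \<theta> \<and> \<theta> \<le> 1"
  define c where "c = real CARD('n) *\<^sub>R g - gf j x $ l"
  have f1: "ft j l (\<theta> *\<^sub>R u + (1 - \<theta>) *\<^sub>R v) x \<le> \<theta> * ft j l u x + (1 - \<theta>) * ft j l v x - \<tau> j / 2 * \<theta> * (1 - \<theta>) * (norm (u - v))\<^sup>2"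
    using ft_strong[OF x, where j=j and l=l] uv th unfolding strongly_convex_on_def by blast
  have f2: "c \<bullet> (\<theta> *\<^sub>R u + (1 - \<theta>) *\<^sub>R v - x $ l) = \<theta> * (c \<bullet> (u - x $ l)) + (1 - \<theta>) * (c \<bullet> (v - x $ l))"
    by (simp add: inner_diff_right inner_add_right algebra_simps)
  have "r l ((1 - \<theta>) *\<^sub>R v + \<theta> *\<^sub>R u) \<le> (1 - \<theta>) * r l v + \<theta> * r l u"
    using convex_onD[OF r_convex, of \<theta> v u] th by simp
  hence f3: "r l (\<theta> *\<^sub>R u + (1 - \<theta>) *\<^sub>R v) \<le> \<theta> * r l u + (1 - \<theta>) * r l v" by (simp add: add.commute)
  show "obj j l x g (\<theta> *\<^sub>R u + (1 - \<theta>) *\<^sub>R v) \<le> \<theta> * obj j l x g u + (1 - \<theta>) * obj j l x g v - \<tau> j / 2 * \<theta> * (1 - \<theta>) * (norm (u - v))\<^sup>2"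
    using f1 f2 f3 unfolding obj_def fhat_def c_def[symmetric] by (simp add: algebra_simps)
qed

lemma obj_arg:
  assumes "x \<in> prodK K"
  shows "argmin_on (K l) (obj j l x g) \<in> K l"
    "\<And>y. y \<in> K l \<Longrightarrow> obj j l x g (argmin_on (K l) (obj j l x g)) + \<tau> j / 2 * (norm (y - argmin_on (K l) (obj j l x g)))\<^sup>2 \<le> obj j l x g y"
  using argmin_props[OF obj_sc[OF assms] \<tau>_pos K_convex K_closed K_ne obj_cont[OF assms]] by auto

lemma xt_eq: "xt t j = argmin_on (K (sel j t)) (obj j (sel j t) (X t j) (Y t j $ sel j t))"
  unfolding xt_def obj_def by simp

definition "W l t j k = A l t j k * \<Phi> t k l / \<Phi> (Suc t) j l"

lemma W_nn: "0 \<le> W l t j k"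
  unfolding W_def using A_nn Phi_pos by (simp add: less_imp_le)

lemma W_rows: "(\<Sum>k\<in>UNIV. W l t j k) = 1"
proof -
  have "(\<Sum>k\<in>UNIV. W l t j k) = (\<Sum>k\<in>UNIV. A l t j k * \<Phi> t k l) / \<Phi> (Suc t) j l"
    unfolding W_def by (simp add: sum_divide_distrib)
  thus ?thesis using Phi_pos[of "Suc t" j l] by (simp add: Phi_upd'[symmetric])
qed

definition "Dl t k l = (if l = sel k t then xt t k - X t k $ l else 0)"

lemma X_upd': "X (Suc t) j $ l = (\<Sum>k\<in>UNIV. W l t j k *\<^sub>R (X t k $ l + \<gamma> t *\<^sub>R Dl t k l))"
  unfolding X_upd W_def Dl_def by (rule sum_nbrs) simp

lemma X_in: "X t j \<in> prodK K"
proof (induction t arbitrary: j)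
  case 0 thus ?case by (rule X0)
next
  case (Suc t)
  have "X (Suc t) j $ l \<in> K l" for l
  proof -
    have pts: "X t k $ l + \<gamma> t *\<^sub>R Dl t k l \<in> K l" for k
    proof (cases "l = sel k t")
      case True
      have xk: "xt t k \<in> K l" using obj_arg(1)[OF Suc.IH[of k]] True by (simp add: xt_eq)
      have xl: "X t k $ l \<in> K l" using Suc.IH[of k] by (simp add: prodK_def)
      have "X t k $ l + \<gamma> t *\<^sub>R Dl t k l = (1 - \<gamma> t) *\<^sub>R (X t k $ l) + \<gamma> t *\<^sub>R xt t k"
        using True by (simp add: Dl_def algebra_simps)
      also have "\<dots> \<in> K l" using K_convex[of l] xk xl \<gamma>_pos[of t] \<gamma>_le1[of t]
        unfolding convex_def by (metis add.commute diff_add_cancel diff_ge_0_iff_ge less_imp_le)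
      finally show ?thesis .
    next
      case False thus ?thesis using Suc.IH[of k] by (simp add: Dl_def prodK_def)
    qed
    show ?thesis unfolding X_upd'
      by (rule convex_sum[OF _ K_convex]) (auto intro: W_rows W_nn pts)
  qed
  thus ?case by (simp add: prodK_def)
qed

definition "Mr l = (SOME M. \<forall>z\<in>K l. \<forall>v. is_subgradient (r l) z v \<longrightarrow> norm v \<le> M)"

lemma Mr: "z \<in> K l \<Longrightarrow> is_subgradient (r l) z v \<Longrightarrow> norm v \<le> Mr l"
proof -
  assume "z \<in> K l" "is_subgradient (r l) z v"
  moreover have "\<forall>z\<in>K l. \<forall>v. is_subgradient (r l) z v \<longrightarrow> norm v \<le> Mr l"
    unfolding Mr_def by (rule someI_ex) (rule r_subgrad_bounded)
  ultimately show ?thesis by blast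
qed

lemma Mr_nn: "0 \<le> Mr l"
proof -
  obtain z where "z \<in> K l" using K_ne by blast
  moreover obtain v where "is_subgradient (r l) z v" using subgrad_exists[OF r_convex] by blast
  ultimately show ?thesis using Mr norm_ge_zero order_trans by blast
qed

lemma delta_bound:
  assumes x: "x \<in> prodK K"
  shows "norm (argmin_on (K l) (obj j l x g) - x $ l) \<le> 2 * (real CARD('n) * norm g + Mr l) / \<tau> j"
proof -
  define z where "z = argmin_on (K l) (obj j l x g)"
  define xl where "xl = x $ l"
  have xlK: "xl \<in> K l" using x by (simp add: prodK_def xl_def)
  have gr: "obj j l x g z + \<tau> j / 2 * (norm (xl - z))\<^sup>2 \<le> obj j l x g xl"
    using obj_arg(2)[OF x xlK] by (simp add: z_def)
  have cv: "\<And>u v \<theta>. u \<in> K l \<Longrightarrow> v \<in> K l \<Longrightarrow> 0 \<le> \<theta> \<Longrightarrow> \<theta> \<le> 1 \<Longrightarrow>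
      ft j l (\<theta> *\<^sub>R u + (1 - \<theta>) *\<^sub>R v) x \<le> \<theta> * ft j l u x + (1 - \<theta>) * ft j l v x"
    by (rule sc_convex[OF ft_strong[OF x]]) (use \<tau>_pos in \<open>auto simp: less_imp_le\<close>)
  have zK: "z \<in> K l" using obj_arg(1)[OF x] by (simp add: z_def)
  have d: "((\<lambda>u. ft j l u x) has_derivative (\<lambda>h. (gf j x $ l) \<bullet> h)) (at xl)"
    using ft_deriv[OF x xlK] ft_grad[OF x] by (simp add: xl_def)
  have g1: "ft j l xl x + (gf j x $ l) \<bullet> (z - xl) \<le> ft j l z x"
    by (rule grad_ineq[where g="\<lambda>u. ft j l u x", OF cv xlK zK d])
  obtain s where s: "is_subgradient (r l) xl s" using subgrad_exists[OF r_convex] by blast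
  have g2: "r l xl + s \<bullet> (z - xl) \<le> r l z" using s by (simp add: is_subgradient_def)
  have ns: "norm s \<le> Mr l" using Mr[OF xlK s] .
  define n where "n = real CARD('n)"
  have "obj j l x g z = ft j l z x + (n *\<^sub>R g - gf j x $ l) \<bullet> (z - xl) + r l z"
    by (simp add: obj_def fhat_def n_def xl_def)
  moreover have "obj j l x g xl = ft j l xl x + r l xl" by (simp add: obj_def fhat_def xl_def)
  ultimately have "\<tau> j / 2 * (norm (z - xl))\<^sup>2 \<le> - ((n *\<^sub>R g + s) \<bullet> (z - xl))"
    using gr g1 g2 by (simp add: norm_minus_commute inner_diff_left inner_add_left)
  also have "\<dots> \<le> norm (n *\<^sub>R g + s) * norm (z - xl)"
    using Cauchy_Schwarz_ineq2[of "n *\<^sub>R g + s" "z - xl"] by (metis abs_le_iff order_trans)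
  also have "\<dots> \<le> (n * norm g + Mr l) * norm (z - xl)"
  proof (rule mult_right_mono)
    have "norm (n *\<^sub>R g + s) \<le> norm (n *\<^sub>R g) + norm s" by (rule norm_triangle_ineq)
    thus "norm (n *\<^sub>R g + s) \<le> n * norm g + Mr l" using ns by (simp add: n_def)
  qed simp
  finally have "(\<tau> j / 2) * (norm (z - xl))\<^sup>2 \<le> (n * norm g + Mr l) * norm (z - xl)" .
  hence "norm (z - xl) \<le> (n * norm g + Mr l) / (\<tau> j / 2)"
    by (intro quad_le) (use \<tau>_pos Mr_nn[of l] in \<open>auto simp: n_def\<close>)
  thus ?thesis by (simp add: z_def xl_def n_def field_simps)
qed

lemma stab:
  assumes x: "x \<in> prodK K"
  shows "norm (argmin_on (K l) (obj j l x g1) - argmin_on (K l) (obj j l x g2)) \<le> real CARD('n) * norm (g1 - g2) / \<tau> j"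
proof -
  define z1 where "z1 = argmin_on (K l) (obj j l x g1)"
  define z2 where "z2 = argmin_on (K l) (obj j l x g2)"
  have z1K: "z1 \<in> K l" and z2K: "z2 \<in> K l" using obj_arg(1)[OF x] by (auto simp: z1_def z2_def)
  have a: "obj j l x g1 z1 + \<tau> j / 2 * (norm (z2 - z1))\<^sup>2 \<le> obj j l x g1 z2"
    using obj_arg(2)[OF x z2K] by (simp add: z1_def)
  have b: "obj j l x g2 z2 + \<tau> j / 2 * (norm (z1 - z2))\<^sup>2 \<le> obj j l x g2 z1"
    using obj_arg(2)[OF x z1K] by (simp add: z2_def)
  define n where "n = real CARD('n)"
  have dif: "obj j l x g2 z - obj j l x g1 z = n * ((g2 - g1) \<bullet> (z - x $ l))" for z
    by (simp add: obj_def fhat_def n_def inner_diff_left algebra_simps)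
  have "\<tau> j * (norm (z1 - z2))\<^sup>2 \<le> n * ((g2 - g1) \<bullet> (z1 - z2))"
  proof -
    have "\<tau> j * (norm (z1 - z2))\<^sup>2 \<le> (obj j l x g2 z1 - obj j l x g1 z1) - (obj j l x g2 z2 - obj j l x g1 z2)"
      using a b by (simp add: norm_minus_commute algebra_simps)
    also have "\<dots> = n * ((g2 - g1) \<bullet> (z1 - z2))" by (simp add: dif inner_diff_right algebra_simps)
    finally show ?thesis .
  qed
  also have "\<dots> \<le> n * (norm (g1 - g2) * norm (z1 - z2))"
  proof (rule mult_left_mono)
    have "(g2 - g1) \<bullet> (z1 - z2) \<le> norm (g2 - g1) * norm (z1 - z2)" by (rule Cauchy_Schwarz_ineq2[THEN order_trans[OF abs_ge_self]])
    thus "(g2 - g1) \<bullet> (z1 - z2) \<le> norm (g1 - g2) * norm (z1 - z2)" by (simp add: norm_minus_commute)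
  qed (simp add: n_def)
  finally have "\<tau> j * (norm (z1 - z2))\<^sup>2 \<le> (n * norm (g1 - g2)) * norm (z1 - z2)" by (simp add: mult.assoc)
  hence "norm (z1 - z2) \<le> n * norm (g1 - g2) / \<tau> j" by (intro quad_le) (use \<tau>_pos in \<open>auto simp: n_def\<close>)
  thus ?thesis by (simp add: z1_def z2_def n_def)
qed

end

context setting
begin

definition "cW = \<kappa> * phimin / real CARD('n)"

lemma cW_pos: "0 < cW" using \<kappa>_pos phimin_pos by (simp add: cW_def)

lemma cW_le1: "cW \<le> 1"
proof -
  have "\<kappa> * phimin \<le> 1 * 1" using kappa1 phimin_le1 \<kappa>_pos phimin_pos by (intro mult_mono) auto
  also have "\<dots> \<le> real CARD('n)" by simp
  finally show ?thesis by (simp add: cW_def)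
qed

lemma W_edge: "(k, j) \<in> edges_blk E sel l t \<Longrightarrow> cW \<le> W l t j k"
proof -
  assume e: "(k, j) \<in> edges_blk E sel l t"
  have "\<kappa> * phimin \<le> A l t j k * \<Phi> t k l"
    using A_pos[OF e] Phi_ge[of t k l] \<kappa>_pos phimin_pos by (intro mult_mono) auto
  moreover have "0 < \<Phi> (Suc t) j l" "\<Phi> (Suc t) j l \<le> real CARD('n)" using Phi_pos Phi_le by auto
  ultimately have "\<kappa> * phimin / real CARD('n) \<le> A l t j k * \<Phi> t k l / \<Phi> (Suc t) j l"
    using \<kappa>_pos phimin_pos mult_nonneg_nonneg[OF A_nn less_imp_le[OF Phi_pos]] by (intro frac_le) auto
  thus ?thesis by (simp add: cW_def W_def)
qed

lemma pathpos_W: "pathpos (W l) (\<lambda>t k j. (k, j) \<in> edges_blk E sel l t) cW E TT"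
  by unfold_locales (auto intro: W_nn W_edge loop_edge cW_pos cW_le1 win_edge E_strong)

lemma cons_W: "consensus (W l) MM (cW ^ MM)"
proof -
  interpret P: pathpos "W l" "\<lambda>t k j. (k, j) \<in> edges_blk E sel l t" cW E TT by (rule pathpos_W)
  show ?thesis
    by unfold_locales (use W_nn W_rows P.allpos cW_pos MM_pos in \<open>auto simp: MM_def P.B_def\<close>)
qed

definition "Gb = (SOME G. \<forall>j. \<forall>x\<in>prodK K. norm (gf j x) \<le> G)"

lemma Gb: "x \<in> prodK K \<Longrightarrow> norm (gf j x) \<le> Gb"
proof -
  have "bounded (\<Union>j. gf j ` prodK K)" by (rule bounded_UN) (auto intro: gf_bounded)
  then obtain a where "\<forall>y\<in>(\<Union>j. gf j ` prodK K). norm y \<le> a" unfolding bounded_iff by blast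
  hence "\<exists>G. \<forall>j. \<forall>x\<in>prodK K. norm (gf j x) \<le> G" by blast
  hence "\<forall>j. \<forall>x\<in>prodK K. norm (gf j x) \<le> Gb" unfolding Gb_def by (rule someI_ex)
  moreover assume "x \<in> prodK K"
  ultimately show ?thesis by blast
qed

lemma Gb_nn: "0 \<le> Gb" using Gb[OF X_in[of 0 undefined]] norm_ge_zero order_trans by blast

lemma comp_le: "\<bar>v $ l $ m\<bar> \<le> norm v"
  using component_le_norm_cart[of "v $ l" m] Finite_Cartesian_Product.norm_nth_le[of v l] by linarith

lemma norm_le_comps: "norm (u :: real^'d) \<le> (\<Sum>m\<in>UNIV. \<bar>u $ m\<bar>)" by (rule norm_le_l1_cart)

lemma norm_le_comps2: "norm (v :: real^'d^'b) \<le> (\<Sum>l\<in>UNIV. \<Sum>m\<in>UNIV. \<bar>v $ l $ m\<bar>)"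
proof -
  have "norm v \<le> (\<Sum>l\<in>UNIV. norm (v $ l))" unfolding norm_vec_def by (rule L2_set_le_sum) simp
  also have "\<dots> \<le> (\<Sum>l\<in>UNIV. \<Sum>m\<in>UNIV. \<bar>v $ l $ m\<bar>)" by (rule sum_mono) (rule norm_le_l1_cart)
  finally show ?thesis .
qed

definition "gd t k = gf k (X (Suc t) k) - gf k (X t k)"

lemma Y_upd': "Y (Suc t) j $ l = (\<Sum>k\<in>UNIV. (A l t j k / \<Phi> (Suc t) j l) *\<^sub>R
                     (\<Phi> t k l *\<^sub>R (Y t k $ l) + gd t k $ l))"
  unfolding Y_upd gd_def by (subst sum_nbrs) (auto simp: algebra_simps)

lemma avg_Y: "(\<Sum>j\<in>UNIV. \<Phi> t j l *\<^sub>R (Y t j $ l)) = (\<Sum>j\<in>UNIV. gf j (X t j) $ l)"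
proof (induction t)
  case 0 thus ?case by (simp add: \<Phi>0 Y0)
next
  case (Suc t)
  have "(\<Sum>j\<in>UNIV. \<Phi> (Suc t) j l *\<^sub>R (Y (Suc t) j $ l)) =
        (\<Sum>j\<in>UNIV. \<Sum>k\<in>UNIV. A l t j k *\<^sub>R (\<Phi> t k l *\<^sub>R (Y t k $ l) + gd t k $ l))"
  proof (rule sum.cong[OF refl])
    fix j
    have "\<Phi> (Suc t) j l > 0" by (rule Phi_pos)
    thus "\<Phi> (Suc t) j l *\<^sub>R (Y (Suc t) j $ l) = (\<Sum>k\<in>UNIV. A l t j k *\<^sub>R (\<Phi> t k l *\<^sub>R (Y t k $ l) + gd t k $ l))"
      by (simp add: Y_upd' scaleR_sum_right)
  qed
  also have "\<dots> = (\<Sum>k\<in>UNIV. \<Sum>j\<in>UNIV. A l t j k *\<^sub>R (\<Phi> t k l *\<^sub>R (Y t k $ l) + gd t k $ l))"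
    by (rule sum.swap)
  also have "\<dots> = (\<Sum>k\<in>UNIV. \<Phi> t k l *\<^sub>R (Y t k $ l) + gd t k $ l)"
    by (simp add: scaleR_sum_left[symmetric] A_colstoch)
  also have "\<dots> = (\<Sum>k\<in>UNIV. \<Phi> t k l *\<^sub>R (Y t k $ l)) + (\<Sum>k\<in>UNIV. gd t k $ l)"
    by (simp add: sum.distrib)
  also have "\<dots> = (\<Sum>j\<in>UNIV. gf j (X (Suc t) j) $ l)"
    using Suc by (simp add: gd_def sum_subtractf)
  finally show ?case .
qed

definition "vY l m t j = Y t j $ l $ m"
definition "vX l m t j = X t j $ l $ m"
definition "epsY t = (\<Sum>k\<in>UNIV. norm (gd t k)) / phimin"

lemma Y_dyn: "\<bar>vY l m (Suc t) j - (\<Sum>k\<in>UNIV. W l t j k * vY l m t k)\<bar> \<le> epsY t"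
proof -
  have eq: "vY l m (Suc t) j = (\<Sum>k\<in>UNIV. W l t j k * vY l m t k) + (\<Sum>k\<in>UNIV. (A l t j k / \<Phi> (Suc t) j l) * (gd t k $ l $ m))"
    by (simp add: vY_def Y_upd' W_def sum.distrib[symmetric] algebra_simps)
  have "\<bar>\<Sum>k\<in>UNIV. (A l t j k / \<Phi> (Suc t) j l) * (gd t k $ l $ m)\<bar> \<le> (\<Sum>k\<in>UNIV. (1 / phimin) * norm (gd t k))"
  proof (rule order_trans[OF sum_abs], rule sum_mono)
    fix k
    have a: "A l t j k / \<Phi> (Suc t) j l \<le> 1 / phimin"
      using A_le1 A_nn Phi_ge[of "Suc t" j l] phimin_pos by (intro frac_le) auto
    have "\<bar>A l t j k / \<Phi> (Suc t) j l * gd t k $ l $ m\<bar> = (A l t j k / \<Phi> (Suc t) j l) * \<bar>gd t k $ l $ m\<bar>"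
      using A_nn Phi_pos by (simp add: abs_mult less_imp_le)
    also have "\<dots> \<le> (1 / phimin) * norm (gd t k)"
      using a comp_le phimin_pos by (intro mult_mono) auto
    finally show "\<bar>A l t j k / \<Phi> (Suc t) j l * gd t k $ l $ m\<bar> \<le> 1 / phimin * norm (gd t k)" .
  qed
  also have "\<dots> = epsY t" by (simp add: epsY_def sum_divide_distrib)
  finally show ?thesis using eq by simp
qed

lemma epsY_bnd: "epsY t \<le> real CARD('n) * (2 * Gb) / phimin"
proof -
  have "norm (gd t k) \<le> 2 * Gb" for k
    using norm_triangle_ineq4[of "gf k (X (Suc t) k)" "gf k (X t k)"] Gb[OF X_in[of "Suc t" k], of k] Gb[OF X_in[of t k], of k]
    unfolding gd_def by linarith
  hence "(\<Sum>k\<in>UNIV. norm (gd t k)) \<le> (\<Sum>k\<in>(UNIV::'n set). 2 * Gb)" by (intro sum_mono)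
  thus ?thesis using phimin_pos by (simp add: epsY_def divide_right_mono)
qed

definition "SY l m = spr (vY l m 0) + 2 * MM * (real CARD('n) * (2 * Gb) / phimin) + 2 * MM * (real CARD('n) * (2 * Gb) / phimin) / (cW ^ MM)"

lemma spr_Y_bnd: "spr (vY l m t) \<le> SY l m"
  unfolding SY_def
  by (rule consensus.spr_bounded[OF cons_W, where v="vY l m" and \<epsilon>=epsY]) (auto intro: Y_dyn epsY_bnd)

lemma Y_comp_bnd: "\<bar>vY l m t j\<bar> \<le> SY l m + Gb"
proof -
  define n where "n = real CARD('n)"
  have n0: "n > 0" by (simp add: n_def)
  have avg: "(\<Sum>k\<in>UNIV. \<Phi> t k l * vY l m t k) = (\<Sum>k\<in>UNIV. gf k (X t k) $ l $ m)"
    using arg_cong[OF avg_Y[of t l], of "\<lambda>v. v $ m"] by (simp add: vY_def)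
  have "n * vY l m t j - (\<Sum>k\<in>UNIV. \<Phi> t k l * vY l m t k) = (\<Sum>k\<in>UNIV. \<Phi> t k l * (vY l m t j - vY l m t k))"
    by (simp add: algebra_simps sum_subtractf sum_distrib_right[symmetric] Phi_sum n_def)
  also have "\<bar>\<dots>\<bar> \<le> (\<Sum>k\<in>UNIV. \<Phi> t k l * spr (vY l m t))"
    by (rule order_trans[OF sum_abs], rule sum_mono) (use Phi_pos spr_ge in \<open>auto simp: abs_mult less_imp_le intro!: mult_left_mono\<close>)
  also have "\<dots> = n * spr (vY l m t)" by (simp add: sum_distrib_right[symmetric] Phi_sum n_def)
  finally have a: "\<bar>n * vY l m t j - (\<Sum>k\<in>UNIV. gf k (X t k) $ l $ m)\<bar> \<le> n * spr (vY l m t)" using avg by simp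
  have b: "\<bar>\<Sum>k\<in>UNIV. gf k (X t k) $ l $ m\<bar> \<le> n * Gb"
  proof -
    have "\<bar>\<Sum>k\<in>UNIV. gf k (X t k) $ l $ m\<bar> \<le> (\<Sum>k\<in>(UNIV::'n set). Gb)"
      by (rule order_trans[OF sum_abs], rule sum_mono) (use comp_le Gb X_in order_trans in blast)
    thus ?thesis by (simp add: n_def)
  qed
  have "\<bar>n * vY l m t j\<bar> \<le> \<bar>n * vY l m t j - (\<Sum>k\<in>UNIV. gf k (X t k) $ l $ m)\<bar> + \<bar>\<Sum>k\<in>UNIV. gf k (X t k) $ l $ m\<bar>"
    using abs_triangle_ineq[of "n * vY l m t j - (\<Sum>k\<in>UNIV. gf k (X t k) $ l $ m)" "\<Sum>k\<in>UNIV. gf k (X t k) $ l $ m"] by simp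
  also have "\<dots> \<le> n * spr (vY l m t) + n * Gb" using a b by (rule add_mono)
  finally have "\<bar>n * vY l m t j\<bar> \<le> n * spr (vY l m t) + n * Gb" .
  moreover have "\<bar>n * vY l m t j\<bar> = n * \<bar>vY l m t j\<bar>" using n0 by (simp add: abs_mult)
  ultimately have "n * \<bar>vY l m t j\<bar> \<le> n * spr (vY l m t) + n * Gb" by simp
  moreover have "n * spr (vY l m t) \<le> n * SY l m" using spr_Y_bnd[of l m t] n0 by (intro mult_left_mono) auto
  ultimately have "n * \<bar>vY l m t j\<bar> \<le> n * (SY l m + Gb)" by (simp add: distrib_left)
  thus ?thesis using n0 by (simp add: mult_le_cancel_left_pos)
qed

end

context setting
begin

definition "YB l = (\<Sum>m\<in>UNIV. SY l m + Gb)"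

lemma Y_norm_bnd: "norm (Y t k $ l) \<le> YB l"
proof -
  have "norm (Y t k $ l) \<le> (\<Sum>m\<in>UNIV. \<bar>Y t k $ l $ m\<bar>)" by (rule norm_le_l1_cart)
  also have "\<dots> \<le> YB l" unfolding YB_def by (rule sum_mono) (use Y_comp_bnd in \<open>simp add: vY_def\<close>)
  finally show ?thesis .
qed

definition "Dmax l = (\<Sum>k\<in>UNIV. 2 * (real CARD('n) * YB l + Mr l) / \<tau> k)"

lemma YB_nn: "0 \<le> YB l" using Y_norm_bnd[of 0 undefined l] norm_ge_zero order_trans by blast

lemma Dmax_term_nn: "0 \<le> 2 * (real CARD('n) * YB l + Mr l) / \<tau> k"
  using YB_nn[of l] Mr_nn[of l] \<tau>_pos[of k] by simp

lemma Dmax_nn: "0 \<le> Dmax l" unfolding Dmax_def by (rule sum_nonneg) (rule Dmax_term_nn)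

lemma Dl_bnd: "norm (Dl t k l) \<le> Dmax l"
proof (cases "l = sel k t")
  case True
  have "norm (Dl t k l) = norm (argmin_on (K l) (obj k l (X t k) (Y t k $ l)) - X t k $ l)"
    using True by (simp add: Dl_def xt_eq)
  also have "\<dots> \<le> 2 * (real CARD('n) * norm (Y t k $ l) + Mr l) / \<tau> k" by (rule delta_bound[OF X_in])
  also have "\<dots> \<le> 2 * (real CARD('n) * YB l + Mr l) / \<tau> k"
    using Y_norm_bnd[of t k l] \<tau>_pos[of k] by (intro divide_right_mono mult_left_mono add_right_mono) auto
  also have "\<dots> \<le> Dmax l" unfolding Dmax_def
    apply (rule member_le_sum)
      apply simp
     apply (rule Dmax_term_nn)
    apply simp
    done
  finally show ?thesis .
next
  case False thus ?thesis using Dmax_nn by (simp add: Dl_def)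
qed

lemma X_dyn: "\<bar>vX l m (Suc t) j - (\<Sum>k\<in>UNIV. W l t j k * vX l m t k)\<bar> \<le> \<gamma> t * Dmax l"
proof -
  have eq: "vX l m (Suc t) j - (\<Sum>k\<in>UNIV. W l t j k * vX l m t k) = \<gamma> t * (\<Sum>k\<in>UNIV. W l t j k * (Dl t k l $ m))"
    by (simp add: vX_def X_upd' algebra_simps sum_subtractf[symmetric] sum_distrib_left)
  have "\<bar>\<Sum>k\<in>UNIV. W l t j k * (Dl t k l $ m)\<bar> \<le> (\<Sum>k\<in>UNIV. W l t j k * Dmax l)"
    by (rule order_trans[OF sum_abs], rule sum_mono)
       (use W_nn in \<open>auto simp: abs_mult intro!: mult_left_mono order_trans[OF component_le_norm_cart Dl_bnd]\<close>)
  also have "\<dots> = Dmax l" by (simp add: sum_distrib_right[symmetric] W_rows)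
  finally show ?thesis using eq \<gamma>_pos[of t] by (simp add: abs_mult mult_left_mono less_imp_le)
qed

lemma gamma_lim: "\<gamma> \<longlonglongrightarrow> 0"
proof -
  have "(\<lambda>t. (\<gamma> t)\<^sup>2) \<longlonglongrightarrow> 0" by (rule summable_LIMSEQ_zero[OF \<gamma>_sq])
  hence "(\<lambda>t. sqrt ((\<gamma> t)\<^sup>2)) \<longlonglongrightarrow> sqrt 0" by (rule tendsto_real_sqrt)
  moreover have "(\<lambda>t. sqrt ((\<gamma> t)\<^sup>2)) = \<gamma>" using \<gamma>_pos by (auto simp: fun_eq_iff less_imp_le)
  ultimately show ?thesis by simp
qed

lemma sprX_lim: "(\<lambda>t. spr (vX l m t)) \<longlonglongrightarrow> 0"
proof (rule consensus.spr_tendsto[OF cons_W, where v="vX l m" and \<epsilon>="\<lambda>t. \<gamma> t * Dmax l"])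
  show "\<And>t j. \<bar>vX l m (Suc t) j - (\<Sum>k\<in>UNIV. W l t j k * vX l m t k)\<bar> \<le> \<gamma> t * Dmax l" by (rule X_dyn)
  show "(\<lambda>t. \<gamma> t * Dmax l) \<longlonglongrightarrow> 0" by (rule tendsto_mult_left_zero[OF gamma_lim])
qed

definition "SX t = (\<Sum>l\<in>UNIV. \<Sum>m\<in>UNIV. spr (vX l m t))"

lemma SX_lim: "SX \<longlonglongrightarrow> 0"
  unfolding SX_def using sprX_lim by (auto intro!: tendsto_null_sum)

lemma vX_spr: "\<bar>X t j $ l $ m - X t k $ l $ m\<bar> \<le> spr (vX l m t)"
  using spr_ge[of "vX l m t" j k] by (simp add: vX_def)

lemma X_diff: "norm (X t j - X t k) \<le> SX t"
proof -
  have "norm (X t j - X t k) \<le> (\<Sum>l\<in>UNIV. \<Sum>m\<in>UNIV. \<bar>(X t j - X t k) $ l $ m\<bar>)" by (rule norm_le_comps2)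
  also have "\<dots> \<le> SX t" unfolding SX_def by (intro sum_mono) (simp add: vX_spr)
  finally show ?thesis .
qed

definition "IX t = (\<Sum>l\<in>UNIV. \<Sum>m\<in>UNIV. spr (vX l m t) + \<gamma> t * Dmax l)"

lemma IX_lim: "IX \<longlonglongrightarrow> 0"
  unfolding IX_def using sprX_lim tendsto_mult_left_zero[OF gamma_lim]
  by (auto intro!: tendsto_null_sum tendsto_add_zero)

lemma X_incr: "norm (X (Suc t) j - X t j) \<le> IX t"
proof -
  have c: "\<bar>(X (Suc t) j - X t j) $ l $ m\<bar> \<le> spr (vX l m t) + \<gamma> t * Dmax l" for l m
  proof -
    have a: "\<bar>vX l m (Suc t) j - (\<Sum>k\<in>UNIV. W l t j k * vX l m t k)\<bar> \<le> \<gamma> t * Dmax l" by (rule X_dyn)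
    have wr: "(\<Sum>k\<in>UNIV. W l t j k * vX l m t j) = vX l m t j" by (simp add: sum_distrib_right[symmetric] W_rows)
    have "(\<Sum>k\<in>UNIV. W l t j k * vX l m t k) - vX l m t j = (\<Sum>k\<in>UNIV. W l t j k * (vX l m t k - vX l m t j))"
      by (simp add: right_diff_distrib sum_subtractf wr)
    also have "\<bar>\<dots>\<bar> \<le> (\<Sum>k\<in>UNIV. W l t j k * spr (vX l m t))"
      by (rule order_trans[OF sum_abs], rule sum_mono) (use W_nn spr_ge in \<open>auto simp: abs_mult intro!: mult_left_mono\<close>)
    also have "\<dots> = spr (vX l m t)" by (simp add: sum_distrib_right[symmetric] W_rows)
    finally have b: "\<bar>(\<Sum>k\<in>UNIV. W l t j k * vX l m t k) - vX l m t j\<bar> \<le> spr (vX l m t)" .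
    have "\<bar>vX l m (Suc t) j - vX l m t j\<bar> \<le> \<bar>vX l m (Suc t) j - (\<Sum>k\<in>UNIV. W l t j k * vX l m t k)\<bar> + \<bar>(\<Sum>k\<in>UNIV. W l t j k * vX l m t k) - vX l m t j\<bar>"
      using abs_triangle_ineq[of "vX l m (Suc t) j - (\<Sum>k\<in>UNIV. W l t j k * vX l m t k)" "(\<Sum>k\<in>UNIV. W l t j k * vX l m t k) - vX l m t j"] by simp
    also have "\<dots> \<le> \<gamma> t * Dmax l + spr (vX l m t)" using a b by (rule add_mono)
    finally show ?thesis by (simp add: vX_def)
  qed
  have "norm (X (Suc t) j - X t j) \<le> (\<Sum>l\<in>UNIV. \<Sum>m\<in>UNIV. \<bar>(X (Suc t) j - X t j) $ l $ m\<bar>)" by (rule norm_le_comps2)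
  also have "\<dots> \<le> IX t" unfolding IX_def by (intro sum_mono c)
  finally show ?thesis .
qed

lemma gf_lip: "x \<in> prodK K \<Longrightarrow> y \<in> prodK K \<Longrightarrow> norm (gf j x - gf j y) \<le> \<bar>Lf j\<bar> * norm (x - y)"
  using gf_lipschitz[of j] by (meson abs_ge_self mult_right_mono norm_ge_zero order_trans)

definition "LS = (\<Sum>j\<in>UNIV. \<bar>Lf j\<bar>)"

lemma epsY_lim: "epsY \<longlonglongrightarrow> 0"
proof (rule Lim_null_comparison[where g="\<lambda>t. LS * IX t / phimin"])
  show "\<forall>\<^sub>F t in sequentially. norm (epsY t) \<le> LS * IX t / phimin"
  proof (rule always_eventually, rule allI)
    fix t
    have "(\<Sum>k\<in>UNIV. norm (gd t k)) \<le> (\<Sum>k\<in>UNIV. \<bar>Lf k\<bar> * IX t)"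
    proof (rule sum_mono)
      fix k
      have "norm (gd t k) \<le> \<bar>Lf k\<bar> * norm (X (Suc t) k - X t k)" unfolding gd_def by (rule gf_lip[OF X_in X_in])
      also have "\<dots> \<le> \<bar>Lf k\<bar> * IX t" by (rule mult_left_mono[OF X_incr]) simp
      finally show "norm (gd t k) \<le> \<bar>Lf k\<bar> * IX t" .
    qed
    also have "\<dots> = LS * IX t" by (simp add: LS_def sum_distrib_right)
    finally have "(\<Sum>k\<in>UNIV. norm (gd t k)) \<le> LS * IX t" .
    hence "epsY t \<le> LS * IX t / phimin" using phimin_pos by (simp add: epsY_def divide_right_mono)
    moreover have "0 \<le> epsY t" using phimin_pos by (simp add: epsY_def sum_nonneg)
    ultimately show "norm (epsY t) \<le> LS * IX t / phimin" by simp
  qed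
  show "(\<lambda>t. LS * IX t / phimin) \<longlonglongrightarrow> 0"
    using tendsto_mult_right_zero[OF IX_lim, of LS] tendsto_divide_zero by blast
qed

lemma sprY_lim: "(\<lambda>t. spr (vY l m t)) \<longlonglongrightarrow> 0"
  by (rule consensus.spr_tendsto[OF cons_W Y_dyn epsY_lim])

end

context setting
begin

lemma LS_nn: "0 \<le> LS" unfolding LS_def by (rule sum_nonneg) simp

lemma comp_bound:
  "\<bar>((1 / real CARD('n)) *\<^sub>R (\<Sum>j\<in>UNIV. gf j (X t i) $ l)) $ m - vY l m t i\<bar>
     \<le> (1 / real CARD('n)) * LS * SX t + spr (vY l m t)"
proof -
  define n where "n = real CARD('n)"
  have n0: "n > 0" by (simp add: n_def)
  have avg: "(\<Sum>k\<in>UNIV. \<Phi> t k l * vY l m t k) = (\<Sum>k\<in>UNIV. gf k (X t k) $ l $ m)"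
    using arg_cong[OF avg_Y[of t l], of "\<lambda>v. v $ m"] by (simp add: vY_def)
  have e1: "n * (((1 / n) *\<^sub>R (\<Sum>j\<in>UNIV. gf j (X t i) $ l)) $ m - vY l m t i) =
      (\<Sum>j\<in>UNIV. (gf j (X t i) - gf j (X t j)) $ l $ m) + ((\<Sum>k\<in>UNIV. \<Phi> t k l * vY l m t k) - n * vY l m t i)"
    using n0 by (simp add: avg sum_subtractf algebra_simps)
  have b1: "\<bar>\<Sum>j\<in>UNIV. (gf j (X t i) - gf j (X t j)) $ l $ m\<bar> \<le> LS * SX t"
  proof -
    have "\<bar>\<Sum>j\<in>UNIV. (gf j (X t i) - gf j (X t j)) $ l $ m\<bar> \<le> (\<Sum>j\<in>UNIV. \<bar>Lf j\<bar> * SX t)"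
    proof (rule order_trans[OF sum_abs], rule sum_mono)
      fix j
      have "\<bar>(gf j (X t i) - gf j (X t j)) $ l $ m\<bar> \<le> norm (gf j (X t i) - gf j (X t j))" by (rule comp_le)
      also have "\<dots> \<le> \<bar>Lf j\<bar> * norm (X t i - X t j)" by (rule gf_lip[OF X_in X_in])
      also have "\<dots> \<le> \<bar>Lf j\<bar> * SX t" by (rule mult_left_mono[OF X_diff]) simp
      finally show "\<bar>(gf j (X t i) - gf j (X t j)) $ l $ m\<bar> \<le> \<bar>Lf j\<bar> * SX t" .
    qed
    thus ?thesis by (simp add: LS_def sum_distrib_right)
  qed
  have b2: "\<bar>(\<Sum>k\<in>UNIV. \<Phi> t k l * vY l m t k) - n * vY l m t i\<bar> \<le> n * spr (vY l m t)"
  proof -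
    have "(\<Sum>k\<in>UNIV. \<Phi> t k l * vY l m t k) - n * vY l m t i = (\<Sum>k\<in>UNIV. \<Phi> t k l * (vY l m t k - vY l m t i))"
      by (simp add: right_diff_distrib sum_subtractf sum_distrib_right[symmetric] Phi_sum n_def)
    also have "\<bar>\<dots>\<bar> \<le> (\<Sum>k\<in>UNIV. \<Phi> t k l * spr (vY l m t))"
      by (rule order_trans[OF sum_abs], rule sum_mono) (use Phi_pos spr_ge in \<open>auto simp: abs_mult less_imp_le intro!: mult_left_mono\<close>)
    also have "\<dots> = n * spr (vY l m t)" by (simp add: sum_distrib_right[symmetric] Phi_sum n_def)
    finally show ?thesis .
  qed
  have "\<bar>n * (((1 / n) *\<^sub>R (\<Sum>j\<in>UNIV. gf j (X t i) $ l)) $ m - vY l m t i)\<bar> \<le> LS * SX t + n * spr (vY l m t)"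
    unfolding e1 using abs_triangle_ineq order_trans add_mono[OF b1 b2] by blast
  hence "n * \<bar>((1 / n) *\<^sub>R (\<Sum>j\<in>UNIV. gf j (X t i) $ l)) $ m - vY l m t i\<bar> \<le> n * ((1 / n) * LS * SX t + spr (vY l m t))"
    using n0 by (simp add: abs_mult distrib_left)
  thus ?thesis using n0 by (simp add: mult_le_cancel_left_pos n_def)
qed

definition "Bl i t l = real CARD('n) * (\<Sum>m\<in>UNIV. (1 / real CARD('n)) * LS * SX t + spr (vY l m t)) / \<tau> i"

lemma Bl_nn: "0 \<le> Bl i t l"
proof -
  have "0 \<le> SX t" unfolding SX_def by (intro sum_nonneg spr_nonneg)
  hence "0 \<le> (\<Sum>m\<in>UNIV. (1 / real CARD('n)) * LS * SX t + spr (vY l m t))"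
    using LS_nn spr_nonneg by (intro sum_nonneg add_nonneg_nonneg) auto
  thus ?thesis using \<tau>_pos[of i] by (simp add: Bl_def)
qed

lemma main_bound: "norm (xhat ft gf r K i (sel i t) (X t i) - xt t i) \<le> Bl i t (sel i t)"
proof -
  define l where "l = sel i t"
  define g1 where "g1 = (1 / real CARD('n)) *\<^sub>R (\<Sum>j\<in>UNIV. gf j (X t i) $ l)"
  have "xhat ft gf r K i l (X t i) = argmin_on (K l) (obj i l (X t i) g1)"
    by (simp add: xhat_def obj_def g1_def)
  moreover have "xt t i = argmin_on (K l) (obj i l (X t i) (Y t i $ l))" by (simp add: xt_eq l_def)
  ultimately have "norm (xhat ft gf r K i l (X t i) - xt t i) \<le> real CARD('n) * norm (g1 - Y t i $ l) / \<tau> i"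
    using stab[OF X_in] by simp
  also have "\<dots> \<le> Bl i t l"
  proof -
    have "norm (g1 - Y t i $ l) \<le> (\<Sum>m\<in>UNIV. \<bar>(g1 - Y t i $ l) $ m\<bar>)" by (rule norm_le_l1_cart)
    also have "\<dots> \<le> (\<Sum>m\<in>UNIV. (1 / real CARD('n)) * LS * SX t + spr (vY l m t))"
      by (rule sum_mono) (use comp_bound in \<open>simp add: g1_def vY_def\<close>)
    finally show ?thesis unfolding Bl_def using \<tau>_pos[of i]
      by (intro divide_right_mono mult_left_mono) auto
  qed
  finally show ?thesis by (simp add: l_def)
qed

lemma final: "(\<lambda>t. norm (xhat ft gf r K i (sel i t) (X t i) - xt t i)) \<longlonglongrightarrow> 0"
proof (rule Lim_null_comparison[where g="\<lambda>t. \<Sum>l\<in>UNIV. Bl i t l"])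
  show "\<forall>\<^sub>F t in sequentially. norm (norm (xhat ft gf r K i (sel i t) (X t i) - xt t i)) \<le> (\<Sum>l\<in>UNIV. Bl i t l)"
  proof (rule always_eventually, rule allI)
    fix t
    have "Bl i t (sel i t) \<le> (\<Sum>l\<in>UNIV. Bl i t l)" by (rule member_le_sum) (auto intro: Bl_nn)
    thus "norm (norm (xhat ft gf r K i (sel i t) (X t i) - xt t i)) \<le> (\<Sum>l\<in>UNIV. Bl i t l)"
      using main_bound[of i t] by simp
  qed
  show "(\<lambda>t. \<Sum>l\<in>UNIV. Bl i t l) \<longlonglongrightarrow> 0"
    unfolding Bl_def using SX_lim sprY_lim
    by (auto intro!: tendsto_null_sum tendsto_add_zero tendsto_mult_right_zero tendsto_divide_zero)
qed

end

theorem mainTheorem9: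
  fixes K :: "'b::finite \<Rightarrow> (real^'d) set"
    and f :: "'n::finite \<Rightarrow> real^'d^'b \<Rightarrow> real"
    and gf :: "'n \<Rightarrow> real^'d^'b \<Rightarrow> real^'d^'b"
    and Lf :: "'n \<Rightarrow> real"
    and r :: "'b \<Rightarrow> real^'d \<Rightarrow> real"
    and E :: "('n \<times> 'n) set"
    and sel :: "'n \<Rightarrow> nat \<Rightarrow> 'b"
    and A :: "'b \<Rightarrow> nat \<Rightarrow> 'n \<Rightarrow> 'n \<Rightarrow> real"
    and \<kappa> :: real
    and ft :: "'n \<Rightarrow> 'b \<Rightarrow> real^'d \<Rightarrow> real^'d^'b \<Rightarrow> real"
    and gft :: "'n \<Rightarrow> 'b \<Rightarrow> real^'d \<Rightarrow> real^'d^'b \<Rightarrow> real^'d"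
    and \<tau> :: "'n \<Rightarrow> real"
    and \<gamma> :: "nat \<Rightarrow> real"
    and X :: "nat \<Rightarrow> 'n \<Rightarrow> real^'d^'b"
    and Y :: "nat \<Rightarrow> 'n \<Rightarrow> real^'d^'b"
    and \<Phi> :: "nat \<Rightarrow> 'n \<Rightarrow> 'b \<Rightarrow> real"
    and xt :: "nat \<Rightarrow> 'n \<Rightarrow> real^'d"
    and i :: 'n
  assumes K_ne: "\<And>l. K l \<noteq> {}"
    and K_closed: "\<And>l. closed (K l)"
    and K_convex: "\<And>l. convex (K l)"
    and f_C1: "\<And>j. \<exists>S. open S \<and> prodK K \<subseteq> S \<and> continuous_on S (gf j) \<and>
                   (\<forall>x\<in>S. (f j has_derivative (\<lambda>h. gf j x \<bullet> h)) (at x))"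
    and gf_lipschitz: "\<And>j. \<forall>x\<in>prodK K. \<forall>y\<in>prodK K. norm (gf j x - gf j y) \<le> Lf j * norm (x - y)"
    and gf_bounded: "\<And>j. bounded (gf j ` prodK K)"
    and r_convex: "\<And>l. convex_on UNIV (r l)"
    and r_subgrad_bounded: "\<And>l. \<exists>M. \<forall>z\<in>K l. \<forall>v. is_subgradient (r l) z v \<longrightarrow> norm v \<le> M"
    and U_coercive: "\<And>M. \<exists>R. \<forall>x\<in>prodK K. R \<le> norm x \<longrightarrow>
                        M \<le> (\<Sum>j\<in>UNIV. f j x) + (\<Sum>l\<in>UNIV. r l (x $ l))"
    and E_strong: "\<And>j k. (j, k) \<in> E\<^sup>*"
    and E_loops: "\<And>j. (j, j) \<in> E"
    and sel_cover: "\<And>j. \<exists>T>0. \<forall>t. (\<Union>s<T. {sel j (t + s)}) = UNIV"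
    and \<kappa>_pos: "\<kappa> > 0"
    and A_pos: "\<And>l t j k. (k, j) \<in> edges_blk E sel l t \<Longrightarrow> A l t j k > \<kappa>"
    and A_zero: "\<And>l t j k. (k, j) \<notin> edges_blk E sel l t \<Longrightarrow> A l t j k = 0"
    and A_colstoch: "\<And>l t k. (\<Sum>j\<in>UNIV. A l t j k) = 1"
    and \<tau>_pos: "\<And>j. \<tau> j > 0"
    and ft_deriv: "\<And>j l x z. x \<in> prodK K \<Longrightarrow> z \<in> K l \<Longrightarrow>
                     ((\<lambda>u. ft j l u x) has_derivative (\<lambda>h. gft j l z x \<bullet> h)) (at z)"
    and ft_C1: "\<And>j l x. x \<in> prodK K \<Longrightarrow> continuous_on (K l) (\<lambda>z. gft j l z x)"
    and ft_strong: "\<And>j l x. x \<in> prodK K \<Longrightarrow> strongly_convex_on (K l) (\<tau> j) (\<lambda>z. ft j l z x)"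
    and ft_grad: "\<And>j l x. x \<in> prodK K \<Longrightarrow> gft j l (x $ l) x = gf j x $ l"
    and ft_lipschitz: "\<And>j l. \<exists>L. \<forall>z\<in>K l. \<forall>x\<in>prodK K. \<forall>y\<in>prodK K.
                          norm (gft j l z x - gft j l z y) \<le> L * norm (x - y)"
    and \<gamma>_pos: "\<And>t. 0 < \<gamma> t"
    and \<gamma>_le1: "\<And>t. \<gamma> t \<le> 1"
    and \<gamma>_mono: "\<And>t. \<gamma> (Suc t) \<le> \<gamma> t"
    and \<gamma>_div: "\<not> summable \<gamma>"
    and \<gamma>_sq: "summable (\<lambda>t. (\<gamma> t)\<^sup>2)"
    and X0: "\<And>j. X 0 j \<in> prodK K"
    and Y0: "\<And>j. Y 0 j = gf j (X 0 j)"
    and \<Phi>0: "\<And>j l. \<Phi> 0 j l = 1"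
    and xt_def: "\<And>t j. xt t j = argmin_on (K (sel j t))
                   (\<lambda>z. fhat ft gf j (sel j t) z (X t j) (Y t j $ sel j t) + r (sel j t) z)"
    and \<Phi>_upd: "\<And>t j l. \<Phi> (Suc t) j l = (\<Sum>k\<in>nbrs_blk E sel j l t. A l t j k * \<Phi> t k l)"
    and X_upd: "\<And>t j l. X (Suc t) j $ l =
                  (\<Sum>k\<in>nbrs_blk E sel j l t. (A l t j k * \<Phi> t k l / \<Phi> (Suc t) j l) *\<^sub>R
                     (X t k $ l + \<gamma> t *\<^sub>R (if l = sel k t then xt t k - X t k $ l else 0)))"
    and Y_upd: "\<And>t j l. Y (Suc t) j $ l =
                  (\<Sum>k\<in>nbrs_blk E sel j l t. (A l t j k / \<Phi> (Suc t) j l) *\<^sub>R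
                     (\<Phi> t k l *\<^sub>R (Y t k $ l) + gf k (X (Suc t) k) $ l - gf k (X t k) $ l))"
  shows "(\<lambda>t. norm (xhat ft gf r K i (sel i t) (X t i) - xt t i)) \<longlonglongrightarrow> 0"
proof -
  interpret setting K f gf Lf r E sel A \<kappa> ft gft \<tau> \<gamma> X Y \<Phi> xt
    by (rule setting.intro) (fact assms)+
  show ?thesis by (rule final)
qed

end
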